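(* Assume $\gamma\|A\|^2<1$ and $\gamma\|A+\bar A\|^2<1$. If $(u_1,u_2)\in\mathcal U^{open}_{ad}$ is an open-loop Nash equilibrium for the zero-sum game and $p$ is the corresponding adjoint process, then for all $t\ge0$, $\mathbb P$-almost surely, $$B_1^\top p_t+2R_1u_{1,t}+\bar B_1^\top\bar p_t+2\bar R_1\bar u_{1,t}=0,\qquad B_2^\top p_t-2R_2u_{2,t}+\bar B_2^\top\bar p_t-2\bar R_2\bar u_{2,t}=0.$$
   Context: Fix integers $d,\ell\ge 1$, $\gamma\in(0,1]$, matrices $A,\bar A\in\mathbb R^{d\times d}$, $B_1,\bar B_1,B_2,\bar B_2\in\mathbb R^{d\times \ell}$, symmetric $Q,\bar Q\in\mathbb R^{d\times d}$, symmetric $R_1,\bar R_1,R_2,\bar R_2\in\mathbb R^{\ell\times\ell}$ with $R_i$, $R_i+\bar R_i$ positive definite. Probability space $(\Omega,\mathcal F,\mathbb P)=(\Omega^0\times\Omega^1,\mathcal F^0\otimes\mathcal F^1,\mathbb P^0\otimes\mathbb P^1)$; noises $\epsilon^0_t(\omega)=\tilde\epsilon^0_t(\omega^0)$, $\epsilon^1_t(\omega)=\tilde\epsilon^1_t(\omega^1)$, $t\ge0$, with $(\tilde\epsilon^j_t)_{t\ge1}$ i.i.d. mean-zero square integrable in $\mathbb R^d$ and $\tilde\epsilon^j_0\sim\mu^j_0$ (square integrable, mean zero) independent of them. $\mathcal F_t=\sigma(\epsilon^0_s,\epsilon^1_s:s\le t)$; $\bar\xi=\mathbb E[\xi\mid\mathcal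 F^0]$. $\mathcal U$ ($\mathcal X$): $\mathbb R^\ell$- ($\mathbb R^d$-)valued adapted processes with $\mathbb E[\sup_{t\le T}\gamma^t\|u_t\|^2]<\infty$ for all $T$ and $\mathbb E\sum_t\gamma^t\|u_t\|^2<\infty$. State: $x_0=\epsilon^0_0+\epsilon^1_0$, $x_{t+1}=Ax_t+\bar A\bar x_t+B_1u_{1,t}+\bar B_1\bar u_{1,t}+B_2u_{2,t}+\bar B_2\bar u_{2,t}+\epsilon^0_{t+1}+\epsilon^1_{t+1}$; $\mathcal U^{open}_{ad}=\{(u_1,u_2)\in\mathcal U^2:x\in\mathcal X\}$. Utility $J(u_1,u_2)=\mathbb E\sum_{t\ge0}\gamma^tc_t$, $c_t=(x_t-\bar x_t)^\top Q(x_t-\bar x_t)+\bar x_t^\top(Q+\bar Q)\bar x_t+(u_{1,t}-\bar u_{1,t})^\top R_1(u_{1,t}-\bar u_{1,t})+\bar u_{1,t}^\top(R_1+\bar R_1)\bar u_{1,t}-(u_{2,t}-\bar u_{2,t})^\top R_2(u_{2,t}-\bar u_{2,t})-\bar u_{2,t}^\top(R_2+\bar R_2)\bar u_{2,t}$. An open-loop Nash equilibrium is $(u_1,u_2)\in\mathcal U^{open}_{ad}$ with $J(u_1,u_2')\le J(u_1,u_2)\le J(u_1',u_2)$ for all $u_1',u_2'\in\mathcal U$. An adjoint process is an $\mathbb R^d$-valued adapted $p$ with $p_t=\gamma\mathbb E[A^\top p_{t+1}+2Qx_{t+1}+\bar A^\top\bar p_{t+1}+2\bar Q\bar x_{t+1}\mid\mathcal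 F_t]$ for all $t\ge 0$. *)

theory Defs
  imports "HOL-Probability.Probability"
begin

definition mat_norm :: "real^'n^'m \<Rightarrow> real" where
  "mat_norm A = onorm (\<lambda>x. A *v x)"

definition pos_def :: "real^'n^'n \<Rightarrow> bool" where
  "pos_def R \<longleftrightarrow> (\<forall>v. v \<noteq> 0 \<longrightarrow> v \<bullet> (R *v v) > 0)"

definition symm :: "real^'n^'n \<Rightarrow> bool" where
  "symm R \<longleftrightarrow> transpose R = R"

definition vcond_exp :: "'w measure \<Rightarrow> 'w measure \<Rightarrow> ('w \<Rightarrow> real^'k) \<Rightarrow> 'w \<Rightarrow> real^'k" where
  "vcond_exp M F X = (\<lambda>w. \<chi> i. real_cond_exp M F (\<lambda>v. X v $ i) w)"

definition noise_assm :: "'a measure \<Rightarrow> (nat \<Rightarrow> 'a \<Rightarrow> real^'d) \<Rightarrow> bool" where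
  "noise_assm M e \<longleftrightarrow> prob_space M \<and>
     (\<forall>t. e t \<in> borel_measurable M) \<and>
     prob_space.indep_vars M (\<lambda>_. borel) e UNIV \<and>
     (\<forall>t\<ge>1. distr M borel (e t) = distr M borel (e 1)) \<and>
     (\<forall>t. integrable M (e t) \<and> integral\<^sup>L M (e t) = 0) \<and>
     (\<forall>t. integrable M (\<lambda>w. (norm (e t w))\<^sup>2))"

definition F0 :: "'a measure \<Rightarrow> 'b measure \<Rightarrow> ('a \<times> 'b) measure" where
  "F0 M0 M1 = vimage_algebra (space (M0 \<Otimes>\<^sub>M M1)) fst M0"

definition filt :: "'a measure \<Rightarrow> 'b measure \<Rightarrow> (nat \<Rightarrow> 'a \<Rightarrow> real^'d) \<Rightarrow> (nat \<Rightarrow> 'b \<Rightarrow> real^'d)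
    \<Rightarrow> nat \<Rightarrow> ('a \<times> 'b) measure" where
  "filt M0 M1 e0 e1 t = sigma (space (M0 \<Otimes>\<^sub>M M1))
     ((\<Union>s\<in>{..t}. {(\<lambda>w. e0 s (fst w)) -` B \<inter> space (M0 \<Otimes>\<^sub>M M1) | B. B \<in> sets borel}) \<union>
      (\<Union>s\<in>{..t}. {(\<lambda>w. e1 s (snd w)) -` B \<inter> space (M0 \<Otimes>\<^sub>M M1) | B. B \<in> sets borel}))"

definition proc_class :: "'w measure \<Rightarrow> (nat \<Rightarrow> 'w measure) \<Rightarrow> real \<Rightarrow> (nat \<Rightarrow> 'w \<Rightarrow> real^'k) \<Rightarrow> bool" where
  "proc_class M F \<gamma> u \<longleftrightarrow>
     (\<forall>t. u t \<in> borel_measurable (F t)) \<and>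
     (\<forall>T. (\<integral>\<^sup>+ w. ennreal (Max {\<gamma>^t * (norm (u t w))\<^sup>2 | t. t \<le> T}) \<partial>M) < \<infinity>) \<and>
     (\<integral>\<^sup>+ w. (\<Sum>t. ennreal (\<gamma>^t * (norm (u t w))\<^sup>2)) \<partial>M) < \<infinity>"

primrec state ::
  "'w measure \<Rightarrow> 'w measure \<Rightarrow> (nat \<Rightarrow> 'w \<Rightarrow> real^'d) \<Rightarrow>
   real^'d^'d \<Rightarrow> real^'d^'d \<Rightarrow> real^'l^'d \<Rightarrow> real^'l^'d \<Rightarrow> real^'l^'d \<Rightarrow> real^'l^'d \<Rightarrow>
   (nat \<Rightarrow> 'w \<Rightarrow> real^'l) \<Rightarrow> (nat \<Rightarrow> 'w \<Rightarrow> real^'l) \<Rightarrow> nat \<Rightarrow> 'w \<Rightarrow> real^'d" where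
  "state M G eps A Ab B1 Bb1 B2 Bb2 u1 u2 0 = eps 0"
| "state M G eps A Ab B1 Bb1 B2 Bb2 u1 u2 (Suc t) =
     (\<lambda>w. A *v state M G eps A Ab B1 Bb1 B2 Bb2 u1 u2 t w
        + Ab *v vcond_exp M G (state M G eps A Ab B1 Bb1 B2 Bb2 u1 u2 t) w
        + B1 *v u1 t w + Bb1 *v vcond_exp M G (u1 t) w
        + B2 *v u2 t w + Bb2 *v vcond_exp M G (u2 t) w
        + eps (Suc t) w)"

definition run_cost ::
  "'w measure \<Rightarrow> 'w measure \<Rightarrow> real^'d^'d \<Rightarrow> real^'d^'d \<Rightarrow> real^'l^'l \<Rightarrow> real^'l^'l \<Rightarrow>
   real^'l^'l \<Rightarrow> real^'l^'l \<Rightarrow> ('w \<Rightarrow> real^'d) \<Rightarrow> ('w \<Rightarrow> real^'l) \<Rightarrow> ('w \<Rightarrow> real^'l) \<Rightarrow> 'w \<Rightarrow> real" where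
  "run_cost M G Q Qb R1 Rb1 R2 Rb2 x v1 v2 w =
     (let xb = vcond_exp M G x w; v1b = vcond_exp M G v1 w; v2b = vcond_exp M G v2 w in
       (x w - xb) \<bullet> (Q *v (x w - xb)) + xb \<bullet> ((Q + Qb) *v xb)
     + (v1 w - v1b) \<bullet> (R1 *v (v1 w - v1b)) + v1b \<bullet> ((R1 + Rb1) *v v1b)
     - (v2 w - v2b) \<bullet> (R2 *v (v2 w - v2b)) - v2b \<bullet> ((R2 + Rb2) *v v2b))"

end

theory Submission
  imports Defs
begin

definition L2 :: "'w measure \<Rightarrow> ('w \<Rightarrow> 'b::real_normed_vector) \<Rightarrow> bool" where
  "L2 M f \<longleftrightarrow> f \<in> borel_measurable M \<and> integrable M (\<lambda>w. (norm (f w))\<^sup>2)"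

lemma meas_blin: "bounded_linear T \<Longrightarrow> f \<in> borel_measurable N \<Longrightarrow> (\<lambda>w. T (f w)) \<in> borel_measurable N"
  by (rule borel_measurable_continuous_on[OF linear_continuous_on])

lemma meas_mat [measurable (raw)]: "f \<in> borel_measurable N \<Longrightarrow> (\<lambda>w. (A::real^'n^'m) *v f w) \<in> borel_measurable N"
  using meas_blin[OF matrix_vector_mul_bounded_linear] .

lemma meas_nth [measurable (raw)]: "f \<in> borel_measurable N \<Longrightarrow> (\<lambda>w. (f w :: real^'n) $ i) \<in> borel_measurable N"
  using meas_blin[OF bounded_linear_vec_nth] .

lemma vec_meas_iff:
  "(f :: 'w \<Rightarrow> real^'k) \<in> borel_measurable N \<longleftrightarrow> (\<forall>i. (\<lambda>w. f w $ i) \<in> borel_measurable N)"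
proof
  assume "f \<in> borel_measurable N"
  then show "\<forall>i. (\<lambda>w. f w $ i) \<in> borel_measurable N"
    by (auto intro: meas_blin[OF bounded_linear_vec_nth])
next
  assume a: "\<forall>i. (\<lambda>w. f w $ i) \<in> borel_measurable N"
  show "f \<in> borel_measurable N"
  proof (subst borel_measurable_euclidean_space, intro ballI)
    fix b :: "real^'k" assume "b \<in> Basis"
    then obtain i where b: "b = axis i 1" by (auto simp: Basis_vec_def)
    show "(\<lambda>x. f x \<bullet> b) \<in> borel_measurable N" using a by (simp add: b inner_axis)
  qed
qed

lemma norm_sq_vec: "(norm (x::real^'k))\<^sup>2 = (\<Sum>i\<in>UNIV. (x$i)\<^sup>2)"
  by (simp only: power2_norm_eq_inner inner_vec_def) (simp add: power2_eq_square)

lemma sq_sum_le: "(a + b)\<^sup>2 \<le> 2 * a\<^sup>2 + 2 * (b::real)\<^sup>2"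
proof -
  have "0 \<le> (a - b)\<^sup>2" by simp
  then show ?thesis using power2_sum[of a b] power2_diff[of a b] by linarith
qed

lemma norm_add_sq_le: "(norm (x + y))\<^sup>2 \<le> 2 * (norm x)\<^sup>2 + 2 * (norm (y::'b::real_normed_vector))\<^sup>2"
proof -
  have "(norm (x + y))\<^sup>2 \<le> (norm x + norm y)\<^sup>2"
    by (simp add: norm_triangle_ineq power_mono)
  also have "\<dots> \<le> 2 * (norm x)\<^sup>2 + 2 * (norm y)\<^sup>2" by (rule sq_sum_le)
  finally show ?thesis .
qed

lemma mat_norm_bound: "norm (A *v x) \<le> mat_norm A * norm (x::real^'n)"
  for A :: "real^'n^'m"
  unfolding mat_norm_def
  using onorm[OF matrix_vector_mul_bounded_linear[of A]] by simp

lemma mat_norm_nonneg: "0 \<le> mat_norm (A::real^'n^'m)"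
  unfolding mat_norm_def using onorm_pos_le[OF matrix_vector_mul_bounded_linear[of A]] by simp

lemma mat_norm_sq_bound: "(norm (A *v x))\<^sup>2 \<le> (mat_norm A)\<^sup>2 * (norm (x::real^'n))\<^sup>2"
  for A :: "real^'n^'m"
  by (metis mat_norm_bound norm_ge_zero power_mono power_mult_distrib)

lemma abs_inner_le_sq: "\<bar>x \<bullet> y\<bar> \<le> (norm x)\<^sup>2 + (norm (y::'b::real_inner))\<^sup>2"
proof -
  have "\<bar>x \<bullet> y\<bar> \<le> norm x * norm y" by (rule Cauchy_Schwarz_ineq2)
  also have "\<dots> \<le> (norm x)\<^sup>2 + (norm y)\<^sup>2"
  proof -
    have "0 \<le> (norm x - norm y)\<^sup>2" by simp
    moreover have "0 \<le> norm x * norm y" by simp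
    ultimately show ?thesis using power2_diff[of "norm x" "norm y"] by linarith
  qed
  finally show ?thesis .
qed

lemma x_le_1_sq: "(x::real) \<le> 1 + x\<^sup>2"
proof -
  have "0 \<le> (x - 1)\<^sup>2" "0 \<le> x\<^sup>2" by simp_all
  moreover have "(x - 1)\<^sup>2 = x\<^sup>2 - 2 * x + 1" by (simp add: power2_diff)
  ultimately show ?thesis by linarith
qed

context prob_space
begin

lemma L2_integrable:
  fixes f :: "'a \<Rightarrow> 'b::{banach, second_countable_topology}"
  assumes "L2 M f" shows "integrable M f"
proof (rule Bochner_Integration.integrable_bound[where f="\<lambda>w. 1 + (norm (f w))\<^sup>2"])
  show "integrable M (\<lambda>w. 1 + (norm (f w))\<^sup>2)" using assms unfolding L2_def by auto
  show "f \<in> borel_measurable M" using assms unfolding L2_def by auto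
  show "AE x in M. norm (f x) \<le> norm (1 + (norm (f x))\<^sup>2)"
    using x_le_1_sq by (auto simp: add_nonneg_nonneg)
qed

lemma L2_meas: "L2 M f \<Longrightarrow> f \<in> borel_measurable M"
  unfolding L2_def by auto

lemma L2_sq: "L2 M f \<Longrightarrow> integrable M (\<lambda>w. (norm (f w))\<^sup>2)"
  unfolding L2_def by auto

lemma L2_add:
  fixes f g :: "'a \<Rightarrow> 'b::{banach, second_countable_topology}"
  assumes "L2 M f" "L2 M g" shows "L2 M (\<lambda>w. f w + g w)"
proof -
  have m: "(\<lambda>w. f w + g w) \<in> borel_measurable M" using assms by (auto simp: L2_def)
  have "integrable M (\<lambda>w. (norm (f w + g w))\<^sup>2)"
  proof (rule Bochner_Integration.integrable_bound[where f="\<lambda>w. 2 * (norm (f w))\<^sup>2 + 2 * (norm (g w))\<^sup>2"])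
    show "integrable M (\<lambda>w. 2 * (norm (f w))\<^sup>2 + 2 * (norm (g w))\<^sup>2)" using assms by (auto simp: L2_def)
    show "(\<lambda>w. (norm (f w + g w))\<^sup>2) \<in> borel_measurable M" using m by measurable
    show "AE x in M. norm ((norm (f x + g x))\<^sup>2) \<le> norm (2 * (norm (f x))\<^sup>2 + 2 * (norm (g x))\<^sup>2)"
      using norm_add_sq_le by (auto)
  qed
  then show ?thesis using m by (simp add: L2_def)
qed

lemma L2_scaleR:
  fixes f :: "'a \<Rightarrow> 'b::{banach, second_countable_topology}"
  assumes "L2 M f" shows "L2 M (\<lambda>w. c *\<^sub>R f w)"
  using assms by (auto simp: L2_def power_mult_distrib)

lemma L2_uminus:
  fixes f :: "'a \<Rightarrow> 'b::{banach, second_countable_topology}"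
  assumes "L2 M f" shows "L2 M (\<lambda>w. - f w)"
  using assms by (auto simp: L2_def)

lemma L2_diff:
  fixes f g :: "'a \<Rightarrow> 'b::{banach, second_countable_topology}"
  assumes "L2 M f" "L2 M g" shows "L2 M (\<lambda>w. f w - g w)"
  using L2_add[OF assms(1) L2_uminus[OF assms(2)]] by simp

lemma L2_zero: "L2 M (\<lambda>w. 0)"
  by (simp add: L2_def)

lemma L2_mat:
  fixes f :: "'a \<Rightarrow> real^'n" and A :: "real^'n^'m"
  assumes "L2 M f" shows "L2 M (\<lambda>w. A *v f w)"
proof -
  have m: "(\<lambda>w. A *v f w) \<in> borel_measurable M"
    using assms by (auto simp: L2_def intro: meas_blin[OF matrix_vector_mul_bounded_linear])
  have "integrable M (\<lambda>w. (norm (A *v f w))\<^sup>2)"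
  proof (rule Bochner_Integration.integrable_bound[where f="\<lambda>w. (mat_norm A)\<^sup>2 * (norm (f w))\<^sup>2"])
    show "integrable M (\<lambda>w. (mat_norm A)\<^sup>2 * (norm (f w))\<^sup>2)" using assms by (auto simp: L2_def)
    show "(\<lambda>w. (norm (A *v f w))\<^sup>2) \<in> borel_measurable M" using m by measurable
    show "AE x in M. norm ((norm (A *v f x))\<^sup>2) \<le> norm ((mat_norm A)\<^sup>2 * (norm (f x))\<^sup>2)"
      using mat_norm_sq_bound by auto
  qed
  then show ?thesis using m by (simp add: L2_def)
qed

lemma L2_comp:
  fixes f :: "'a \<Rightarrow> real^'k"
  assumes "L2 M f" shows "L2 M (\<lambda>w. f w $ i)"
proof -
  have m: "(\<lambda>w. f w $ i) \<in> borel_measurable M" using assms vec_meas_iff by (auto simp: L2_def)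
  have "integrable M (\<lambda>w. (norm (f w $ i))\<^sup>2)"
  proof (rule Bochner_Integration.integrable_bound[where f="\<lambda>w. (norm (f w))\<^sup>2"])
    show "integrable M (\<lambda>w. (norm (f w))\<^sup>2)" using assms by (auto simp: L2_def)
    show "(\<lambda>w. (norm (f w $ i))\<^sup>2) \<in> borel_measurable M" using m by measurable
    show "AE x in M. norm ((norm (f x $ i))\<^sup>2) \<le> norm ((norm (f x))\<^sup>2)"
      by (intro AE_I2) (simp add: abs_le_square_iff[symmetric] component_le_norm_cart)
  qed
  then show ?thesis using m by (simp add: L2_def)
qed

lemma L2_vec:
  fixes f :: "'a \<Rightarrow> real^'k"
  assumes "\<And>i. L2 M (\<lambda>w. f w $ i)" shows "L2 M f"
proof -
  have m: "f \<in> borel_measurable M" using assms vec_meas_iff by (auto simp: L2_def)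
  have "integrable M (\<lambda>w. \<Sum>i\<in>UNIV. (f w $ i)\<^sup>2)"
    using assms by (auto simp: L2_def)
  then show ?thesis using m by (simp add: L2_def norm_sq_vec)
qed

lemma L2_inner:
  fixes f g :: "'a \<Rightarrow> 'b::{real_inner, banach, second_countable_topology}"
  assumes "L2 M f" "L2 M g" shows "integrable M (\<lambda>w. f w \<bullet> g w)"
proof (rule Bochner_Integration.integrable_bound[where f="\<lambda>w. (norm (f w))\<^sup>2 + (norm (g w))\<^sup>2"])
  show "integrable M (\<lambda>w. (norm (f w))\<^sup>2 + (norm (g w))\<^sup>2)" using assms by (auto simp: L2_def)
  show "(\<lambda>w. f w \<bullet> g w) \<in> borel_measurable M" using assms by (auto simp: L2_def)
  show "AE x in M. norm (f x \<bullet> g x) \<le> norm ((norm (f x))\<^sup>2 + (norm (g x))\<^sup>2)"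
    using abs_inner_le_sq by auto
qed

lemma L2_mult:
  fixes f g :: "'a \<Rightarrow> real"
  assumes "L2 M f" "L2 M g" shows "integrable M (\<lambda>w. f w * g w)"
  using L2_inner[OF assms] by simp

lemma L2_cong:
  fixes f g :: "'a \<Rightarrow> 'b::{banach, second_countable_topology}"
  assumes "L2 M f" "g \<in> borel_measurable M" "AE w in M. f w = g w" shows "L2 M g"
proof -
  have "integrable M (\<lambda>w. (norm (g w))\<^sup>2)"
    by (rule integrable_cong_AE_imp[OF L2_sq[OF assms(1)]]) (use assms in \<open>auto elim!: AE_mp\<close>)
  then show ?thesis using assms by (simp add: L2_def)
qed

end



lemma vcond_exp_measF [measurable]: "vcond_exp M F f \<in> borel_measurable F"
  unfolding vcond_exp_def by (subst vec_meas_iff) simp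

lemma vcond_exp_measM [measurable]: "vcond_exp M F f \<in> borel_measurable M"
  unfolding vcond_exp_def by (subst vec_meas_iff) simp

lemma vcond_exp_nth: "vcond_exp M F f w $ i = real_cond_exp M F (\<lambda>v. f v $ i) w"
  unfolding vcond_exp_def by simp

locale psub = prob_space M for M :: "'w measure" +
  fixes F :: "'w measure"
  assumes subF: "subalgebra M F"

sublocale psub \<subseteq> finite_measure_subalgebra M F
  by unfold_locales (rule subF)

context psub
begin

lemma rce_L2:
  fixes g :: "'w \<Rightarrow> real"
  assumes g: "L2 M g"
  shows "L2 M (real_cond_exp M F g)" "(\<integral>w. (real_cond_exp M F g w)\<^sup>2 \<partial>M) \<le> (\<integral>w. (g w)\<^sup>2 \<partial>M)"
proof -
  have ig: "integrable M g" using L2_integrable[OF g] .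
  have ig2: "integrable M (\<lambda>w. (g w)\<^sup>2)" using L2_sq[OF g] by simp
  have cv: "convex_on UNIV (\<lambda>x::real. x\<^sup>2)" using convex_power2 by simp
  have J: "AE x in M. (real_cond_exp M F g x)\<^sup>2 \<le> real_cond_exp M F (\<lambda>x. (g x)\<^sup>2) x"
    using real_cond_exp_jensens_inequality(2)[OF ig _ _ ig2 cv, of 0 0] by auto
  have I: "integrable M (\<lambda>x. (real_cond_exp M F g x)\<^sup>2)"
    using integrable_convex_cond_exp[OF ig _ _ ig2 cv, of 0 0] by auto
  then show "L2 M (real_cond_exp M F g)" by (simp add: L2_def)
  have "(\<integral>w. (real_cond_exp M F g w)\<^sup>2 \<partial>M) \<le> (\<integral>w. real_cond_exp M F (\<lambda>x. (g x)\<^sup>2) w \<partial>M)"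
    by (rule integral_mono_AE[OF I real_cond_exp_int(1)[OF ig2] J])
  also have "\<dots> = (\<integral>w. (g w)\<^sup>2 \<partial>M)" by (rule real_cond_exp_int(2)[OF ig2])
  finally show "(\<integral>w. (real_cond_exp M F g w)\<^sup>2 \<partial>M) \<le> (\<integral>w. (g w)\<^sup>2 \<partial>M)" .
qed

lemma vce_L2:
  fixes f :: "'w \<Rightarrow> real^'k"
  assumes f: "L2 M f"
  shows "L2 M (vcond_exp M F f)" "(\<integral>w. (norm (vcond_exp M F f w))\<^sup>2 \<partial>M) \<le> (\<integral>w. (norm (f w))\<^sup>2 \<partial>M)"
proof -
  have c: "\<And>i. L2 M (\<lambda>w. f w $ i)" using L2_comp[OF f] .
  show L: "L2 M (vcond_exp M F f)"
    by (rule L2_vec) (simp add: vcond_exp_nth rce_L2(1)[OF c])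
  have "(\<integral>w. (norm (vcond_exp M F f w))\<^sup>2 \<partial>M) = (\<integral>w. (\<Sum>i\<in>UNIV. (real_cond_exp M F (\<lambda>v. f v $ i) w)\<^sup>2) \<partial>M)"
    by (simp add: norm_sq_vec vcond_exp_nth)
  also have "\<dots> = (\<Sum>i\<in>UNIV. (\<integral>w. (real_cond_exp M F (\<lambda>v. f v $ i) w)\<^sup>2 \<partial>M))"
    by (rule Bochner_Integration.integral_sum) (use rce_L2(1)[OF c] in \<open>simp add: L2_def\<close>)
  also have "\<dots> \<le> (\<Sum>i\<in>UNIV. (\<integral>w. (f w $ i)\<^sup>2 \<partial>M))"
    by (rule sum_mono) (rule rce_L2(2)[OF c])
  also have "\<dots> = (\<integral>w. (\<Sum>i\<in>UNIV. (f w $ i)\<^sup>2) \<partial>M)"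
    by (rule Bochner_Integration.integral_sum[symmetric]) (use c in \<open>simp add: L2_def\<close>)
  also have "\<dots> = (\<integral>w. (norm (f w))\<^sup>2 \<partial>M)" by (simp add: norm_sq_vec)
  finally show "(\<integral>w. (norm (vcond_exp M F f w))\<^sup>2 \<partial>M) \<le> (\<integral>w. (norm (f w))\<^sup>2 \<partial>M)" .
qed

lemma vec_AE_eqI:
  fixes f g :: "'w \<Rightarrow> real^'k"
  assumes "\<And>i. AE w in M. f w $ i = g w $ i"
  shows "AE w in M. f w = g w"
proof -
  have "AE w in M. \<forall>i\<in>UNIV. f w $ i = g w $ i"
    by (rule AE_finite_allI) (use assms in auto)
  then show ?thesis by (auto simp: vec_eq_iff)
qed

lemma vce_cong:
  fixes f g :: "'w \<Rightarrow> real^'k"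
  assumes "AE w in M. f w = g w" "f \<in> borel_measurable M" "g \<in> borel_measurable M"
  shows "AE w in M. vcond_exp M F f w = vcond_exp M F g w"
proof (rule vec_AE_eqI)
  fix i
  have "AE w in M. f w $ i = g w $ i" using assms(1) by auto
  then show "AE w in M. vcond_exp M F f w $ i = vcond_exp M F g w $ i"
    unfolding vcond_exp_nth by (rule real_cond_exp_cong) (use assms in auto)
qed

lemma vce_add:
  fixes f g :: "'w \<Rightarrow> real^'k"
  assumes "L2 M f" "L2 M g"
  shows "AE w in M. vcond_exp M F (\<lambda>w. f w + g w) w = vcond_exp M F f w + vcond_exp M F g w"
proof (rule vec_AE_eqI)
  fix i
  show "AE w in M. vcond_exp M F (\<lambda>w. f w + g w) w $ i = (vcond_exp M F f w + vcond_exp M F g w) $ i"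
    unfolding vcond_exp_nth vector_add_component
    by (rule real_cond_exp_add) (use L2_integrable[OF L2_comp[OF assms(1)]] L2_integrable[OF L2_comp[OF assms(2)]] in auto)
qed

lemma vce_scaleR:
  fixes f :: "'w \<Rightarrow> real^'k"
  assumes "L2 M f"
  shows "AE w in M. vcond_exp M F (\<lambda>w. c *\<^sub>R f w) w = c *\<^sub>R vcond_exp M F f w"
proof (rule vec_AE_eqI)
  fix i
  show "AE w in M. vcond_exp M F (\<lambda>w. c *\<^sub>R f w) w $ i = (c *\<^sub>R vcond_exp M F f w) $ i"
    unfolding vcond_exp_nth vector_scaleR_component real_scaleR_def
    by (rule real_cond_exp_cmult) (use L2_integrable[OF L2_comp[OF assms(1)]] in auto)
qed

lemma vce_mat:
  fixes f :: "'w \<Rightarrow> real^'n" and A :: "real^'n^'m"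
  assumes "L2 M f"
  shows "AE w in M. vcond_exp M F (\<lambda>w. A *v f w) w = A *v vcond_exp M F f w"
proof (rule vec_AE_eqI)
  fix i
  have int: "\<And>j. integrable M (\<lambda>w. A $ i $ j * f w $ j)"
    using L2_integrable[OF L2_comp[OF assms(1)]] by auto
  have "AE w in M. real_cond_exp M F (\<lambda>w. \<Sum>j\<in>UNIV. A $ i $ j * f w $ j) w
      = (\<Sum>j\<in>UNIV. real_cond_exp M F (\<lambda>w. A $ i $ j * f w $ j) w)"
    by (rule real_cond_exp_sum) (rule int)
  moreover have "AE w in M. \<forall>j\<in>UNIV. real_cond_exp M F (\<lambda>w. A $ i $ j * f w $ j) w
      = A $ i $ j * real_cond_exp M F (\<lambda>w. f w $ j) w"
    by (rule AE_finite_allI) (use L2_integrable[OF L2_comp[OF assms(1)]] in auto)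
  ultimately show "AE w in M. vcond_exp M F (\<lambda>w. A *v f w) w $ i = (A *v vcond_exp M F f w) $ i"
    unfolding vcond_exp_nth by (auto simp: matrix_vector_mult_def vcond_exp_nth)
qed

lemma vce_Fmeas:
  fixes f :: "'w \<Rightarrow> real^'k"
  assumes "L2 M f" "f \<in> borel_measurable F"
  shows "AE w in M. vcond_exp M F f w = f w"
proof (rule vec_AE_eqI)
  fix i
  show "AE w in M. vcond_exp M F f w $ i = f w $ i"
    unfolding vcond_exp_nth
    by (rule real_cond_exp_F_meas) (use L2_integrable[OF L2_comp[OF assms(1)]] assms(2) in auto)
qed

lemma vce_inner:
  fixes h g :: "'w \<Rightarrow> real^'k"
  assumes "L2 M h" "h \<in> borel_measurable F" "L2 M g"
  shows "(\<integral>w. h w \<bullet> vcond_exp M F g w \<partial>M) = (\<integral>w. h w \<bullet> g w \<partial>M)"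
proof -
  have hF: "\<And>i. (\<lambda>w. h w $ i) \<in> borel_measurable F" using assms(2) by measurable
  have I1: "\<And>i. integrable M (\<lambda>w. h w $ i * g w $ i)"
    using L2_mult[OF L2_comp[OF assms(1)] L2_comp[OF assms(3)]] .
  have I2: "\<And>i. integrable M (\<lambda>w. h w $ i * real_cond_exp M F (\<lambda>v. g v $ i) w)"
    using L2_mult[OF L2_comp[OF assms(1)] rce_L2(1)[OF L2_comp[OF assms(3)]]] .
  have "(\<integral>w. h w \<bullet> vcond_exp M F g w \<partial>M) = (\<integral>w. (\<Sum>i\<in>UNIV. h w $ i * real_cond_exp M F (\<lambda>v. g v $ i) w) \<partial>M)"
    by (simp add: inner_vec_def vcond_exp_nth)
  also have "\<dots> = (\<Sum>i\<in>UNIV. (\<integral>w. h w $ i * real_cond_exp M F (\<lambda>v. g v $ i) w \<partial>M))"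
    by (rule Bochner_Integration.integral_sum) (rule I2)
  also have "\<dots> = (\<Sum>i\<in>UNIV. (\<integral>w. h w $ i * g w $ i \<partial>M))"
    by (rule sum.cong[OF refl]) (rule real_cond_exp_intg(2)[OF I1 hF], use L2_meas[OF assms(3)] in measurable)
  also have "\<dots> = (\<integral>w. (\<Sum>i\<in>UNIV. h w $ i * g w $ i) \<partial>M)"
    by (rule Bochner_Integration.integral_sum[symmetric]) (rule I1)
  also have "\<dots> = (\<integral>w. h w \<bullet> g w \<partial>M)" by (simp add: inner_vec_def)
  finally show ?thesis .
qed

lemma vce_sym:
  fixes f g :: "'w \<Rightarrow> real^'k"
  assumes "L2 M f" "L2 M g"
  shows "(\<integral>w. f w \<bullet> vcond_exp M F g w \<partial>M) = (\<integral>w. vcond_exp M F f w \<bullet> g w \<partial>M)"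
proof -
  have "(\<integral>w. f w \<bullet> vcond_exp M F g w \<partial>M) = (\<integral>w. vcond_exp M F g w \<bullet> f w \<partial>M)"
    by (simp add: inner_commute)
  also have "\<dots> = (\<integral>w. vcond_exp M F g w \<bullet> vcond_exp M F f w \<partial>M)"
    by (rule vce_inner[symmetric]) (use vce_L2(1) assms in auto)
  also have "\<dots> = (\<integral>w. vcond_exp M F f w \<bullet> vcond_exp M F g w \<partial>M)"
    by (simp add: inner_commute)
  also have "\<dots> = (\<integral>w. vcond_exp M F f w \<bullet> g w \<partial>M)"
    by (rule vce_inner) (use vce_L2(1) assms in auto)
  finally show ?thesis .
qed

lemma vce_idem:
  fixes f :: "'w \<Rightarrow> real^'k"
  assumes "L2 M f"
  shows "AE w in M. vcond_exp M F (vcond_exp M F f) w = vcond_exp M F f w"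
  by (rule vce_Fmeas) (use vce_L2(1)[OF assms] in auto)

end



locale mfg = prob_space M for M :: "'w measure" +
  fixes G :: "'w measure" and F :: "nat \<Rightarrow> 'w measure" and \<gamma> :: real
  assumes subG: "subalgebra M G"
    and subF: "\<And>t. subalgebra M (F t)"
    and Fmono: "\<And>t. sets (F t) \<subseteq> sets (F (Suc t))"
    and prodprop: "\<And>t (f::'w \<Rightarrow> real). f \<in> borel_measurable (F t) \<Longrightarrow> integrable M f \<Longrightarrow>
        \<exists>g. g \<in> borel_measurable (F t) \<and> (AE w in M. real_cond_exp M G f w = g w)"
    and gpos: "0 < \<gamma>" and gle1: "\<gamma> \<le> 1"
begin

sublocale G: psub M G by unfold_locales (rule subG)

definition good :: "(nat \<Rightarrow> 'w \<Rightarrow> real^'k) \<Rightarrow> bool" where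
  "good f \<longleftrightarrow> (\<forall>t. L2 M (f t)) \<and> summable (\<lambda>t. \<gamma>^t * (\<integral>w. (norm (f t w))\<^sup>2 \<partial>M))"

definition gp :: "(nat \<Rightarrow> 'w \<Rightarrow> real) \<Rightarrow> bool" where
  "gp b \<longleftrightarrow> (\<forall>t. integrable M (b t)) \<and> (\<forall>t w. 0 \<le> b t w) \<and> summable (\<lambda>t. \<gamma>^t * (\<integral>w. b t w \<partial>M))"

lemma gp_norm: "good f \<Longrightarrow> gp (\<lambda>t w. (norm (f t w))\<^sup>2)"
  unfolding good_def gp_def L2_def by auto

lemma gp_add: "gp a \<Longrightarrow> gp b \<Longrightarrow> gp (\<lambda>t w. a t w + b t w)"
  unfolding gp_def by (auto simp: distrib_left intro: summable_add)

lemma gp_cmult: "gp a \<Longrightarrow> 0 \<le> c \<Longrightarrow> gp (\<lambda>t w. c * a t w)"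
  unfolding gp_def by (auto simp: mult.left_commute intro: summable_mult)

lemma good_L2: "good f \<Longrightarrow> L2 M (f t)"
  unfolding good_def by auto

lemma good_summable: "good f \<Longrightarrow> summable (\<lambda>t. \<gamma>^t * (\<integral>w. (norm (f t w))\<^sup>2 \<partial>M))"
  unfolding good_def by auto

lemma good_bound:
  fixes f :: "nat \<Rightarrow> 'w \<Rightarrow> real^'k" and g :: "nat \<Rightarrow> 'w \<Rightarrow> real^'m"
  assumes "good f" "\<And>t. L2 M (g t)" "\<And>t. (\<integral>w. (norm (g t w))\<^sup>2 \<partial>M) \<le> C * (\<integral>w. (norm (f t w))\<^sup>2 \<partial>M)"
  shows "good g"
proof -
  have "summable (\<lambda>t. C * (\<gamma>^t * (\<integral>w. (norm (f t w))\<^sup>2 \<partial>M)))"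
    using good_summable[OF assms(1)] by (rule summable_mult)
  then have "summable (\<lambda>t. \<gamma>^t * (\<integral>w. (norm (g t w))\<^sup>2 \<partial>M))"
  proof (rule summable_comparison_test[rotated], intro exI allI impI)
    fix t :: nat
    have "0 \<le> (\<integral>w. (norm (g t w))\<^sup>2 \<partial>M)" by (rule integral_nonneg_AE) auto
    then show "norm (\<gamma>^t * (\<integral>w. (norm (g t w))\<^sup>2 \<partial>M)) \<le> C * (\<gamma>^t * (\<integral>w. (norm (f t w))\<^sup>2 \<partial>M))"
      using assms(3)[of t] gpos by (auto simp: abs_mult mult.left_commute intro!: mult_left_mono)
  qed
  then show ?thesis using assms(2) by (simp add: good_def)
qed

lemma good_vc: "good f \<Longrightarrow> good (\<lambda>t. vcond_exp M G (f t))"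
  by (rule good_bound[where C=1]) (auto intro: G.vce_L2 good_L2)

lemma int_sq_add_le:
  fixes f g :: "'w \<Rightarrow> real^'k"
  assumes "L2 M f" "L2 M g"
  shows "(\<integral>w. (norm (f w + g w))\<^sup>2 \<partial>M) \<le> 2 * (\<integral>w. (norm (f w))\<^sup>2 \<partial>M) + 2 * (\<integral>w. (norm (g w))\<^sup>2 \<partial>M)"
proof -
  have "(\<integral>w. (norm (f w + g w))\<^sup>2 \<partial>M) \<le> (\<integral>w. 2 * (norm (f w))\<^sup>2 + 2 * (norm (g w))\<^sup>2 \<partial>M)"
    by (rule integral_mono) (use L2_sq[OF L2_add[OF assms]] L2_sq[OF assms(1)] L2_sq[OF assms(2)] norm_add_sq_le in auto)
  also have "\<dots> = 2 * (\<integral>w. (norm (f w))\<^sup>2 \<partial>M) + 2 * (\<integral>w. (norm (g w))\<^sup>2 \<partial>M)"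
    using L2_sq[OF assms(1)] L2_sq[OF assms(2)] by simp
  finally show ?thesis .
qed

lemma good_add:
  fixes f g :: "nat \<Rightarrow> 'w \<Rightarrow> real^'k"
  assumes "good f" "good g" shows "good (\<lambda>t w. f t w + g t w)"
proof -
  have s: "summable (\<lambda>t. 2 * (\<gamma>^t * (\<integral>w. (norm (f t w))\<^sup>2 \<partial>M)) + 2 * (\<gamma>^t * (\<integral>w. (norm (g t w))\<^sup>2 \<partial>M)))"
    using good_summable[OF assms(1)] good_summable[OF assms(2)] by (intro summable_add summable_mult)
  have L: "\<And>t. L2 M (\<lambda>w. f t w + g t w)" using assms by (auto intro: L2_add good_L2)
  have "summable (\<lambda>t. \<gamma>^t * (\<integral>w. (norm (f t w + g t w))\<^sup>2 \<partial>M))"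
  proof (rule summable_comparison_test[OF _ s], intro exI allI impI)
    fix t :: nat
    have "0 \<le> (\<integral>w. (norm (f t w + g t w))\<^sup>2 \<partial>M)" by (rule integral_nonneg_AE) auto
    moreover have "\<gamma>^t * (\<integral>w. (norm (f t w + g t w))\<^sup>2 \<partial>M) \<le> \<gamma>^t * (2 * (\<integral>w. (norm (f t w))\<^sup>2 \<partial>M) + 2 * (\<integral>w. (norm (g t w))\<^sup>2 \<partial>M))"
      using int_sq_add_le[OF good_L2[OF assms(1)] good_L2[OF assms(2)], of t] gpos
      by (intro mult_left_mono) auto
    ultimately show "norm (\<gamma>^t * (\<integral>w. (norm (f t w + g t w))\<^sup>2 \<partial>M)) \<le> 2 * (\<gamma>^t * (\<integral>w. (norm (f t w))\<^sup>2 \<partial>M)) + 2 * (\<gamma>^t * (\<integral>w. (norm (g t w))\<^sup>2 \<partial>M))"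
      using gpos by (simp add: abs_mult algebra_simps)
  qed
  then show ?thesis using L by (simp add: good_def)
qed

lemma good_scaleR: "good f \<Longrightarrow> good (\<lambda>t w. c *\<^sub>R f t w)"
  by (rule good_bound[where C="c\<^sup>2"]) (auto intro: L2_scaleR good_L2 simp: power_mult_distrib)

lemma good_mat:
  fixes f :: "nat \<Rightarrow> 'w \<Rightarrow> real^'n" and A :: "real^'n^'m"
  shows "good f \<Longrightarrow> good (\<lambda>t w. A *v f t w)"
proof (rule good_bound[where C="(mat_norm A)\<^sup>2"])
  fix t assume f: "good f"
  show "L2 M (\<lambda>w. A *v f t w)" using f by (auto intro: L2_mat good_L2)
  show "(\<integral>w. (norm (A *v f t w))\<^sup>2 \<partial>M) \<le> (mat_norm A)\<^sup>2 * (\<integral>w. (norm (f t w))\<^sup>2 \<partial>M)"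
  proof -
    have "(\<integral>w. (norm (A *v f t w))\<^sup>2 \<partial>M) \<le> (\<integral>w. (mat_norm A)\<^sup>2 * (norm (f t w))\<^sup>2 \<partial>M)"
      by (rule integral_mono) (use L2_sq[OF L2_mat[OF good_L2[OF f]]] L2_sq[OF good_L2[OF f]] mat_norm_sq_bound in auto)
    then show ?thesis by simp
  qed
qed

lemma good_diff: "good f \<Longrightarrow> good g \<Longrightarrow> good (\<lambda>t w. f t w - g t w)"
  using good_add[of f "\<lambda>t w. (-1) *\<^sub>R g t w"] good_scaleR[of g "-1"] by simp

lemma good_zero: "good (\<lambda>t w. 0)"
  by (simp add: good_def L2_zero)

lemma gp_dom:
  fixes h :: "nat \<Rightarrow> 'w \<Rightarrow> real"
  assumes hm: "\<And>t. h t \<in> borel_measurable M" and b: "gp b" and bd: "\<And>t. AE w in M. \<bar>h t w\<bar> \<le> b t w"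
  shows "\<And>t. integrable M (h t)" "AE w in M. summable (\<lambda>t. \<gamma>^t * h t w)"
    "integrable M (\<lambda>w. \<Sum>t. \<gamma>^t * h t w)"
    "(\<integral>w. (\<Sum>t. \<gamma>^t * h t w) \<partial>M) = (\<Sum>t. \<gamma>^t * (\<integral>w. h t w \<partial>M))"
    "summable (\<lambda>t. \<gamma>^t * (\<integral>w. h t w \<partial>M))"
proof -
  have bi: "\<And>t. integrable M (b t)" and bnn: "\<And>t w. 0 \<le> b t w"
    and bs: "summable (\<lambda>t. \<gamma>^t * (\<integral>w. b t w \<partial>M))" using b by (auto simp: gp_def)
  have bm[measurable]: "\<And>t. b t \<in> borel_measurable M" using bi by auto
  show hi: "\<And>t. integrable M (h t)"
    by (rule Bochner_Integration.integrable_bound[OF bi hm]) (use bd bnn in auto)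
  have "(\<integral>\<^sup>+w. (\<Sum>t. ennreal (\<gamma>^t * b t w)) \<partial>M) = (\<Sum>t. \<integral>\<^sup>+w. ennreal (\<gamma>^t * b t w) \<partial>M)"
    by (rule nn_integral_suminf) measurable
  also have "\<dots> = (\<Sum>t. ennreal (\<gamma>^t * (\<integral>w. b t w \<partial>M)))"
    by (rule suminf_cong, subst nn_integral_eq_integral) (use bi bnn gpos in auto)
  also have "\<dots> \<noteq> \<top>"
    by (rule ennreal_suminf_neq_top[OF bs]) (use bnn gpos in \<open>auto intro!: integral_nonneg_AE\<close>)
  finally have fin: "(\<integral>\<^sup>+w. (\<Sum>t. ennreal (\<gamma>^t * b t w)) \<partial>M) \<noteq> \<infinity>" by simp
  have "AE w in M. (\<Sum>t. ennreal (\<gamma>^t * b t w)) \<noteq> \<infinity>"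
    by (rule nn_integral_noteq_infinite[OF _ fin]) measurable
  then have bsum: "AE w in M. summable (\<lambda>t. \<gamma>^t * b t w)"
    by (rule AE_mp) (auto intro!: AE_I2 summable_suminf_not_top simp: bnn gpos less_imp_le)
  have "AE w in M. \<forall>t. \<bar>h t w\<bar> \<le> b t w" using bd by (simp add: AE_all_countable)
  with bsum have nsum: "AE w in M. summable (\<lambda>t. norm (\<gamma>^t * h t w))"
  proof eventually_elim
    case (elim w)
    show ?case
    proof (rule summable_comparison_test[OF _ elim(1)], intro exI allI impI)
      fix t :: nat show "norm (norm (\<gamma>^t * h t w)) \<le> \<gamma>^t * b t w"
        using elim(2) gpos by (simp add: abs_mult mult_left_mono)
    qed
  qed
  then show "AE w in M. summable (\<lambda>t. \<gamma>^t * h t w)"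
    by eventually_elim (rule summable_norm_cancel)
  have isum: "summable (\<lambda>t. \<integral>w. norm (\<gamma>^t * h t w) \<partial>M)"
  proof (rule summable_comparison_test[OF _ bs], intro exI allI impI)
    fix t :: nat
    have "(\<integral>w. norm (\<gamma>^t * h t w) \<partial>M) = \<gamma>^t * (\<integral>w. \<bar>h t w\<bar> \<partial>M)"
      using gpos by (simp add: abs_mult)
    also have "\<dots> \<le> \<gamma>^t * (\<integral>w. b t w \<partial>M)"
      by (intro mult_left_mono integral_mono_AE) (use hi bi bd gpos in auto)
    finally show "norm (\<integral>w. norm (\<gamma>^t * h t w) \<partial>M) \<le> \<gamma>^t * (\<integral>w. b t w \<partial>M)" by simp
  qed
  have hi': "\<And>t. integrable M (\<lambda>w. \<gamma>^t * h t w)" using hi by auto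
  show "integrable M (\<lambda>w. \<Sum>t. \<gamma>^t * h t w)"
    by (rule integrable_suminf[OF hi' nsum isum])
  show "(\<integral>w. (\<Sum>t. \<gamma>^t * h t w) \<partial>M) = (\<Sum>t. \<gamma>^t * (\<integral>w. h t w \<partial>M))"
    using integral_suminf[OF hi' nsum isum] by simp
  show "summable (\<lambda>t. \<gamma>^t * (\<integral>w. h t w \<partial>M))"
    using summable_integral[OF hi' nsum isum] by simp
qed

lemma pc_good:
  fixes u :: "nat \<Rightarrow> 'w \<Rightarrow> real^'k"
  assumes "proc_class M F \<gamma> u" shows "good u"
proof -
  have um[measurable]: "\<And>t. u t \<in> borel_measurable M"
    using assms subF by (auto simp: proc_class_def intro: measurable_from_subalg)
  define N where "N = (\<integral>\<^sup>+ w. (\<Sum>t. ennreal (\<gamma>^t * (norm (u t w))\<^sup>2)) \<partial>M)"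
  have N: "N < \<infinity>" using assms by (simp add: proc_class_def N_def)
  have N2: "N = (\<Sum>t. \<integral>\<^sup>+ w. ennreal (\<gamma>^t * (norm (u t w))\<^sup>2) \<partial>M)"
    unfolding N_def by (rule nn_integral_suminf) measurable
  have le: "\<And>t. (\<integral>\<^sup>+ w. ennreal (\<gamma>^t * (norm (u t w))\<^sup>2) \<partial>M) \<le> N"
    unfolding N2 by (rule sum_le_suminf[OF summableI, of "{t}" for t, simplified]) 
  have I: "\<And>t. integrable M (\<lambda>w. \<gamma>^t * (norm (u t w))\<^sup>2)"
  proof -
    fix t
    have "(\<integral>\<^sup>+ w. ennreal (norm (\<gamma>^t * (norm (u t w))\<^sup>2)) \<partial>M) < \<infinity>"
      using le[of t] N gpos by (simp add: abs_mult)
    then show "integrable M (\<lambda>w. \<gamma>^t * (norm (u t w))\<^sup>2)"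
      by (subst integrable_iff_bounded) auto
  qed
  then have L: "\<And>t. L2 M (u t)" using gpos by (simp add: L2_def)
  have "(\<Sum>t. ennreal (\<gamma>^t * (\<integral>w. (norm (u t w))\<^sup>2 \<partial>M))) = N"
    unfolding N2
    by (rule suminf_cong, subst nn_integral_eq_integral) (use I gpos in auto)
  then have "summable (\<lambda>t. \<gamma>^t * (\<integral>w. (norm (u t w))\<^sup>2 \<partial>M))"
    using N by (intro summable_suminf_not_top) (auto intro!: integral_nonneg_AE simp: gpos less_imp_le)
  then show ?thesis using L by (simp add: good_def)
qed

lemma good_pc:
  fixes u :: "nat \<Rightarrow> 'w \<Rightarrow> real^'k"
  assumes g: "good u" and mF: "\<And>t. u t \<in> borel_measurable (F t)"
  shows "proc_class M F \<gamma> u"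
proof -
  have um[measurable]: "\<And>t. u t \<in> borel_measurable M" using g by (auto simp: good_def L2_def)
  have I: "\<And>t. integrable M (\<lambda>w. \<gamma>^t * (norm (u t w))\<^sup>2)" using g by (auto simp: good_def L2_def)
  have "(\<integral>\<^sup>+ w. (\<Sum>t. ennreal (\<gamma>^t * (norm (u t w))\<^sup>2)) \<partial>M) = (\<Sum>t. \<integral>\<^sup>+ w. ennreal (\<gamma>^t * (norm (u t w))\<^sup>2) \<partial>M)"
    by (rule nn_integral_suminf) measurable
  also have "\<dots> = (\<Sum>t. ennreal (\<gamma>^t * (\<integral>w. (norm (u t w))\<^sup>2 \<partial>M)))"
    by (rule suminf_cong, subst nn_integral_eq_integral) (use I gpos in auto)
  also have "\<dots> < \<infinity>"
  proof -
    have "(\<Sum>t. ennreal (\<gamma>^t * (\<integral>w. (norm (u t w))\<^sup>2 \<partial>M))) \<noteq> \<top>"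
      by (rule ennreal_suminf_neq_top[OF good_summable[OF g]])
        (intro mult_nonneg_nonneg zero_le_power integral_nonneg_AE, use gpos in auto)
    then show ?thesis by (simp add: less_top)
  qed
  finally have T: "(\<integral>\<^sup>+ w. (\<Sum>t. ennreal (\<gamma>^t * (norm (u t w))\<^sup>2)) \<partial>M) < \<infinity>" .
  have M: "(\<integral>\<^sup>+ w. ennreal (Max {\<gamma>^t * (norm (u t w))\<^sup>2 | t. t \<le> T}) \<partial>M) < \<infinity>" for T
  proof -
    have "(\<integral>\<^sup>+ w. ennreal (Max {\<gamma>^t * (norm (u t w))\<^sup>2 | t. t \<le> T}) \<partial>M)
        \<le> (\<integral>\<^sup>+ w. (\<Sum>t. ennreal (\<gamma>^t * (norm (u t w))\<^sup>2)) \<partial>M)"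
    proof (rule nn_integral_mono)
      fix w
      let ?S = "{\<gamma>^t * (norm (u t w))\<^sup>2 | t. t \<le> T}"
      have fin: "finite ?S" by simp
      have ne: "?S \<noteq> {}" by auto
      from Max_in[OF fin ne] obtain t0 where t0: "Max ?S = \<gamma>^t0 * (norm (u t0 w))\<^sup>2" by auto
      have "ennreal (\<gamma>^t0 * (norm (u t0 w))\<^sup>2) \<le> (\<Sum>t. ennreal (\<gamma>^t * (norm (u t w))\<^sup>2))"
        by (rule sum_le_suminf[OF summableI, of "{t0}", simplified])
      then show "ennreal (Max ?S) \<le> (\<Sum>t. ennreal (\<gamma>^t * (norm (u t w))\<^sup>2))" by (simp add: t0)
    qed
    then show ?thesis by (rule le_less_trans[OF _ T])
  qed
  show ?thesis unfolding proc_class_def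
  proof (intro conjI allI)
    fix t show "u t \<in> borel_measurable (F t)" by (rule mF)
  next
    fix T show "(\<integral>\<^sup>+ w. ennreal (Max {\<gamma>^t * (norm (u t w))\<^sup>2 | t. t \<le> T}) \<partial>M) < \<infinity>" by (rule M)
  next
    show "(\<integral>\<^sup>+ w. (\<Sum>t. ennreal (\<gamma>^t * (norm (u t w))\<^sup>2)) \<partial>M) < \<infinity>" by (rule T)
  qed
qed

definition aeF :: "nat \<Rightarrow> ('w \<Rightarrow> real^'k) \<Rightarrow> bool" where
  "aeF t f \<longleftrightarrow> (\<exists>g. g \<in> borel_measurable (F t) \<and> (AE w in M. f w = g w))"

lemma aeF_meas: "f \<in> borel_measurable (F t) \<Longrightarrow> aeF t f"
  unfolding aeF_def by auto

lemma F_mono_le: "t \<le> t' \<Longrightarrow> sets (F t) \<subseteq> sets (F t')"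
proof (induction t' rule: dec_induct)
  case base then show ?case by simp
next
  case (step n) then show ?case using Fmono[of n] by auto
qed

lemma measF_mono: "t \<le> t' \<Longrightarrow> f \<in> borel_measurable (F t) \<Longrightarrow> f \<in> borel_measurable (F t')"
  using measurable_mono[of borel borel "F t" "F t'"] F_mono_le[of t t'] subF[of t] subF[of t']
  by (auto simp: subalgebra_def)

lemma aeF_mono: "t \<le> t' \<Longrightarrow> aeF t f \<Longrightarrow> aeF t' f"
  unfolding aeF_def using measF_mono by blast

lemma aeF_add:
  fixes f g :: "'w \<Rightarrow> real^'k"
  assumes "aeF t f" "aeF t g" shows "aeF t (\<lambda>w. f w + g w)"
proof -
  obtain f' g' where "f' \<in> borel_measurable (F t)" "AE w in M. f w = f' w"
    "g' \<in> borel_measurable (F t)" "AE w in M. g w = g' w" using assms unfolding aeF_def by blast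
  then show ?thesis unfolding aeF_def
    by (intro exI[of _ "\<lambda>w. f' w + g' w"]) auto
qed

lemma aeF_mat:
  fixes f :: "'w \<Rightarrow> real^'n" and A :: "real^'n^'m"
  assumes "aeF t f" shows "aeF t (\<lambda>w. A *v f w)"
proof -
  obtain f' where "f' \<in> borel_measurable (F t)" "AE w in M. f w = f' w"
    using assms unfolding aeF_def by blast
  then show ?thesis unfolding aeF_def
    by (intro exI[of _ "\<lambda>w. A *v f' w"]) auto
qed

lemma aeF_scaleR:
  fixes f :: "'w \<Rightarrow> real^'n"
  assumes "aeF t f" shows "aeF t (\<lambda>w. c *\<^sub>R f w)"
proof -
  obtain f' where "f' \<in> borel_measurable (F t)" "AE w in M. f w = f' w"
    using assms unfolding aeF_def by blast
  then show ?thesis unfolding aeF_def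
    by (intro exI[of _ "\<lambda>w. c *\<^sub>R f' w"]) auto
qed

lemma aeF_vc:
  fixes f :: "'w \<Rightarrow> real^'k"
  assumes a: "aeF t f" and L: "L2 M f"
  shows "aeF t (vcond_exp M G f)"
proof -
  obtain g where gm: "g \<in> borel_measurable (F t)" and fg: "AE w in M. f w = g w"
    using a unfolding aeF_def by blast
  have gM: "g \<in> borel_measurable M" using gm subF by (rule measurable_from_subalg[rotated])
  have Lg: "L2 M g" by (rule L2_cong[OF L gM fg])
  have "\<forall>i. \<exists>h. h \<in> borel_measurable (F t) \<and> (AE w in M. real_cond_exp M G (\<lambda>v. g v $ i) w = h w)"
  proof
    fix i
    show "\<exists>h. h \<in> borel_measurable (F t) \<and> (AE w in M. real_cond_exp M G (\<lambda>v. g v $ i) w = h w)"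
      by (rule prodprop) (use gm L2_integrable[OF L2_comp[OF Lg]] in auto)
  qed
  then obtain H where H: "\<And>i. H i \<in> borel_measurable (F t)"
    "\<And>i. AE w in M. real_cond_exp M G (\<lambda>v. g v $ i) w = H i w" by metis
  define h where "h = (\<lambda>w. \<chi> i. H i w)"
  have hm: "h \<in> borel_measurable (F t)" unfolding h_def using H(1) by (subst vec_meas_iff) simp
  have "AE w in M. vcond_exp M G g w = h w"
    by (rule G.vec_AE_eqI) (simp add: h_def vcond_exp_nth H(2))
  moreover have "AE w in M. vcond_exp M G f w = vcond_exp M G g w"
    by (rule G.vce_cong[OF fg]) (use L2_meas[OF L] gM in auto)
  ultimately show ?thesis unfolding aeF_def using hm by (intro exI[of _ h]) auto
qed

lemma cond_F_inner:
  fixes f Z :: "'w \<Rightarrow> real^'k"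
  assumes a: "aeF t f" and Lf: "L2 M f" and LZ: "L2 M Z"
  shows "(\<integral>w. f w \<bullet> vcond_exp M (F t) Z w \<partial>M) = (\<integral>w. f w \<bullet> Z w \<partial>M)"
proof -
  interpret Ft: psub M "F t" by unfold_locales (rule subF)
  obtain g where gm: "g \<in> borel_measurable (F t)" and fg: "AE w in M. f w = g w"
    using a unfolding aeF_def by blast
  have gM: "g \<in> borel_measurable M" using gm subF by (rule measurable_from_subalg[rotated])
  have Lg: "L2 M g" by (rule L2_cong[OF Lf gM fg])
  have "(\<integral>w. f w \<bullet> vcond_exp M (F t) Z w \<partial>M) = (\<integral>w. g w \<bullet> vcond_exp M (F t) Z w \<partial>M)"
    by (rule integral_cong_AE) (use fg L2_meas[OF Lf] gM in auto)
  also have "\<dots> = (\<integral>w. g w \<bullet> Z w \<partial>M)" by (rule Ft.vce_inner[OF Lg gm LZ])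
  also have "\<dots> = (\<integral>w. f w \<bullet> Z w \<partial>M)"
    by (rule integral_cong_AE) (use fg L2_meas[OF Lf] gM L2_meas[OF LZ] in auto)
  finally show ?thesis .
qed

end



lemma symm_inner: "symm P \<Longrightarrow> x \<bullet> (P *v y) = y \<bullet> (P *v (x::real^'n))"
proof -
  assume s: "symm P"
  have "x \<bullet> (P *v y) = (x v* P) \<bullet> y" by (rule dot_lmul_matrix[symmetric])
  also have "x v* P = transpose P *v x" by simp
  also have "\<dots> = P *v x" using s by (simp add: symm_def)
  finally show ?thesis by (simp add: inner_commute)
qed

lemma symm_add: "symm P \<Longrightarrow> symm Pb \<Longrightarrow> symm (P + Pb)"
  unfolding symm_def by (simp add: transpose_def vec_eq_iff)

lemma quad_expand:
  assumes "symm S"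
  shows "(e + c *\<^sub>R f) \<bullet> (S *v (e + c *\<^sub>R f)) = e \<bullet> (S *v e) + 2 * c * (e \<bullet> (S *v f)) + c\<^sup>2 * (f \<bullet> (S *v (f::real^'n)))"
proof -
  have "f \<bullet> (S *v e) = e \<bullet> (S *v f)" using symm_inner[OF assms] by simp
  then show ?thesis
    by (simp add: matrix_vector_right_distrib matrix_vector_mult_scaleR inner_add_left inner_add_right
        algebra_simps power2_eq_square)
qed

lemma inner_mat_bound: "\<bar>a \<bullet> (S *v b)\<bar> \<le> mat_norm S * ((norm a)\<^sup>2 + (norm (b::real^'n))\<^sup>2)"
  for S :: "real^'n^'m"
proof -
  have "\<bar>a \<bullet> (S *v b)\<bar> \<le> norm a * norm (S *v b)" by (rule Cauchy_Schwarz_ineq2)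
  also have "\<dots> \<le> norm a * (mat_norm S * norm b)" by (intro mult_left_mono mat_norm_bound) auto
  also have "\<dots> = mat_norm S * (norm a * norm b)" by simp
  also have "\<dots> \<le> mat_norm S * ((norm a)\<^sup>2 + (norm b)\<^sup>2)"
  proof (intro mult_left_mono mat_norm_nonneg)
    have "0 \<le> (norm a - norm b)\<^sup>2" "0 \<le> norm a * norm b" by simp_all
    then show "norm a * norm b \<le> (norm a)\<^sup>2 + (norm b)\<^sup>2" using power2_diff[of "norm a" "norm b"] by linarith
  qed
  finally show ?thesis .
qed

locale game = mfg M G F \<gamma> for M :: "'w measure" and G F \<gamma> +
  fixes A Ab Q Qb :: "real^'d^'d" and B1 Bb1 B2 Bb2 :: "real^'l^'d" and R1 Rb1 R2 Rb2 :: "real^'l^'l"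
  assumes symQ: "symm Q" "symm Qb" and symR: "symm R1" "symm Rb1" "symm R2" "symm Rb2"
    and normA: "\<gamma> * (mat_norm A)\<^sup>2 < 1" "\<gamma> * (mat_norm (A + Ab))\<^sup>2 < 1"
begin

abbreviation vc where "vc f \<equiv> vcond_exp M G f"

abbreviation st where "st eps v1 v2 \<equiv> state M G eps A Ab B1 Bb1 B2 Bb2 v1 v2"

abbreviation rc where "rc x v1 v2 \<equiv> run_cost M G Q Qb R1 Rb1 R2 Rb2 x v1 v2"

definition JJ where "JJ eps v1 v2 = (\<integral>w. (\<Sum>t. \<gamma>^t * rc (st eps v1 v2 t) (v1 t) (v2 t) w) \<partial>M)"

definition qf :: "real^'n^'n \<Rightarrow> real^'n^'n \<Rightarrow> ('w \<Rightarrow> real^'n) \<Rightarrow> ('w \<Rightarrow> real^'n) \<Rightarrow> 'w \<Rightarrow> real" where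
  "qf P Pb x y w = (x w - vc x w) \<bullet> (P *v (y w - vc y w)) + vc x w \<bullet> ((P + Pb) *v vc y w)"

lemma rc_qf: "rc x v1 v2 w = qf Q Qb x x w + qf R1 Rb1 v1 v1 w - qf R2 Rb2 v2 v2 w"
  unfolding run_cost_def qf_def Let_def by simp

lemma qf_meas [measurable (raw)]:
  assumes [measurable]: "x \<in> borel_measurable M" "y \<in> borel_measurable M"
  shows "qf P Pb x y \<in> borel_measurable M"
  unfolding qf_def by measurable

lemma rc_meas [measurable (raw)]:
  assumes [measurable]: "x \<in> borel_measurable M" "v1 \<in> borel_measurable M" "v2 \<in> borel_measurable M"
  shows "rc x v1 v2 \<in> borel_measurable M"
  unfolding rc_qf[abs_def] by measurable

lemma qf_bound:
  "\<bar>qf P Pb x y w\<bar> \<le> (2 * mat_norm P + mat_norm (P + Pb)) *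
     ((norm (x w))\<^sup>2 + (norm (vc x w))\<^sup>2 + (norm (y w))\<^sup>2 + (norm (vc y w))\<^sup>2)"
proof -
  let ?a = "x w" and ?ab = "vc x w" and ?b = "y w" and ?bb = "vc y w"
  have 1: "\<bar>(?a - ?ab) \<bullet> (P *v (?b - ?bb))\<bar> \<le> mat_norm P * ((norm (?a - ?ab))\<^sup>2 + (norm (?b - ?bb))\<^sup>2)"
    by (rule inner_mat_bound)
  have "(norm (?a - ?ab))\<^sup>2 \<le> 2 * (norm ?a)\<^sup>2 + 2 * (norm ?ab)\<^sup>2"
    using norm_add_sq_le[of ?a "- ?ab"] by simp
  moreover have "(norm (?b - ?bb))\<^sup>2 \<le> 2 * (norm ?b)\<^sup>2 + 2 * (norm ?bb)\<^sup>2"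
    using norm_add_sq_le[of ?b "- ?bb"] by simp
  ultimately have h1b: "\<bar>(?a - ?ab) \<bullet> (P *v (?b - ?bb))\<bar> \<le> mat_norm P * (2 * ((norm ?a)\<^sup>2 + (norm ?ab)\<^sup>2 + (norm ?b)\<^sup>2 + (norm ?bb)\<^sup>2))"
  proof -
    assume h1: "(norm (?a - ?ab))\<^sup>2 \<le> 2 * (norm ?a)\<^sup>2 + 2 * (norm ?ab)\<^sup>2"
      and h2: "(norm (?b - ?bb))\<^sup>2 \<le> 2 * (norm ?b)\<^sup>2 + 2 * (norm ?bb)\<^sup>2"
    have "mat_norm P * ((norm (?a - ?ab))\<^sup>2 + (norm (?b - ?bb))\<^sup>2)
        \<le> mat_norm P * (2 * ((norm ?a)\<^sup>2 + (norm ?ab)\<^sup>2 + (norm ?b)\<^sup>2 + (norm ?bb)\<^sup>2))"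
    proof (intro mult_left_mono mat_norm_nonneg)
      have "(norm (?a - ?ab))\<^sup>2 + (norm (?b - ?bb))\<^sup>2 \<le> (2 * (norm ?a)\<^sup>2 + 2 * (norm ?ab)\<^sup>2) + (2 * (norm ?b)\<^sup>2 + 2 * (norm ?bb)\<^sup>2)"
        by (rule add_mono[OF h1 h2])
      also have "\<dots> = 2 * ((norm ?a)\<^sup>2 + (norm ?ab)\<^sup>2 + (norm ?b)\<^sup>2 + (norm ?bb)\<^sup>2)" by (simp add: algebra_simps)
      finally show "(norm (?a - ?ab))\<^sup>2 + (norm (?b - ?bb))\<^sup>2 \<le> 2 * ((norm ?a)\<^sup>2 + (norm ?ab)\<^sup>2 + (norm ?b)\<^sup>2 + (norm ?bb)\<^sup>2)" .
    qed
    then show ?thesis using 1 by linarith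
  qed
  have 2: "\<bar>?ab \<bullet> ((P + Pb) *v ?bb)\<bar> \<le> mat_norm (P + Pb) * ((norm ?ab)\<^sup>2 + (norm ?bb)\<^sup>2)"
    by (rule inner_mat_bound)
  have h2b: "\<dots> \<le> mat_norm (P + Pb) * ((norm ?a)\<^sup>2 + (norm ?ab)\<^sup>2 + (norm ?b)\<^sup>2 + (norm ?bb)\<^sup>2)"
    by (intro mult_left_mono mat_norm_nonneg) auto
  have "\<bar>qf P Pb x y w\<bar> \<le> \<bar>(?a - ?ab) \<bullet> (P *v (?b - ?bb))\<bar> + \<bar>?ab \<bullet> ((P + Pb) *v ?bb)\<bar>"
    unfolding qf_def by (rule abs_triangle_ineq)
  also have "\<dots> \<le> mat_norm P * (2 * ((norm ?a)\<^sup>2 + (norm ?ab)\<^sup>2 + (norm ?b)\<^sup>2 + (norm ?bb)\<^sup>2))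
      + mat_norm (P + Pb) * ((norm ?a)\<^sup>2 + (norm ?ab)\<^sup>2 + (norm ?b)\<^sup>2 + (norm ?bb)\<^sup>2)"
    using h1b 2 h2b by linarith
  also have "\<dots> = (2 * mat_norm P + mat_norm (P + Pb)) * ((norm ?a)\<^sup>2 + (norm ?ab)\<^sup>2 + (norm ?b)\<^sup>2 + (norm ?bb)\<^sup>2)"
    by (simp add: algebra_simps)
  finally show ?thesis .
qed

lemma arith6: "((a1::real) + 2 * c * a2 + c\<^sup>2 * a3) + (b1 + 2 * c * b2 + c\<^sup>2 * b3) = (a1 + b1) + 2 * c * (a2 + b2) + c\<^sup>2 * (a3 + b3)"
  by (simp add: algebra_simps)

lemma qf_expand:
  assumes "symm P" "symm Pb"
    and "x' w = x w + c *\<^sub>R d w" "vc x' w = vc x w + c *\<^sub>R vc d w"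
  shows "qf P Pb x' x' w = qf P Pb x x w + 2 * c * qf P Pb x d w + c\<^sup>2 * qf P Pb d d w"
proof -
  let ?E = "x w - vc x w" and ?D = "d w - vc d w" and ?X = "vc x w" and ?Y = "vc d w" and ?S = "P + Pb"
  have e: "x' w - (vc x w + c *\<^sub>R vc d w) = ?E + c *\<^sub>R ?D"
    using assms(3) by (simp add: algebra_simps)
  have "qf P Pb x' x' w = (?E + c *\<^sub>R ?D) \<bullet> (P *v (?E + c *\<^sub>R ?D)) + (?X + c *\<^sub>R ?Y) \<bullet> (?S *v (?X + c *\<^sub>R ?Y))"
    unfolding qf_def assms(4) e ..
  also have "\<dots> = (?E \<bullet> (P *v ?E) + 2 * c * (?E \<bullet> (P *v ?D)) + c\<^sup>2 * (?D \<bullet> (P *v ?D)))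
      + (?X \<bullet> (?S *v ?X) + 2 * c * (?X \<bullet> (?S *v ?Y)) + c\<^sup>2 * (?Y \<bullet> (?S *v ?Y)))"
    by (simp only: quad_expand[OF assms(1)] quad_expand[OF symm_add[OF assms(1,2)]])
  also have "\<dots> = (?E \<bullet> (P *v ?E) + ?X \<bullet> (?S *v ?X)) + 2 * c * (?E \<bullet> (P *v ?D) + ?X \<bullet> (?S *v ?Y))
      + c\<^sup>2 * (?D \<bullet> (P *v ?D) + ?Y \<bullet> (?S *v ?Y))"
    by (rule arith6)
  also have "\<dots> = qf P Pb x x w + 2 * c * qf P Pb x d w + c\<^sup>2 * qf P Pb d d w"
    by (simp only: qf_def)
  finally show ?thesis .
qed

lemma st_meas [measurable]:
  assumes [measurable]: "\<And>t. eps t \<in> borel_measurable M" "\<And>t. v1 t \<in> borel_measurable M" "\<And>t. v2 t \<in> borel_measurable M"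
  shows "st eps v1 v2 t \<in> borel_measurable M"
proof (induction t)
  case 0 then show ?case using assms by simp
next
  case (Suc t)
  have [measurable]: "st eps v1 v2 t \<in> borel_measurable M" by (rule Suc)
  show ?case by (simp only: state.simps) measurable
qed

lemma st_L2:
  assumes "\<And>t. L2 M (eps t)" "\<And>t. L2 M (v1 t)" "\<And>t. L2 M (v2 t)"
  shows "L2 M (st eps v1 v2 t)"
proof (induction t)
  case 0 then show ?case using assms by simp
next
  case (Suc t)
  show ?case
    by (simp only: state.simps)
      (intro L2_add L2_mat G.vce_L2 Suc assms)
qed

lemma st_lin:
  assumes em: "\<And>t. eps t \<in> borel_measurable M"
    and L: "\<And>t. L2 M (u1 t)" "\<And>t. L2 M (u2 t)" "\<And>t. L2 M (v1 t)" "\<And>t. L2 M (v2 t)"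
    and Lx: "\<And>t. L2 M (st eps u1 u2 t)"
  shows "AE w in M. st eps (\<lambda>t w. u1 t w + c *\<^sub>R v1 t w) (\<lambda>t w. u2 t w + c *\<^sub>R v2 t w) t w
            = st eps u1 u2 t w + c *\<^sub>R st (\<lambda>t w. 0) v1 v2 t w"
proof (induction t)
  case 0 then show ?case by simp
next
  case (Suc t)
  let ?u1 = "\<lambda>t w. u1 t w + c *\<^sub>R v1 t w" and ?u2 = "\<lambda>t w. u2 t w + c *\<^sub>R v2 t w"
  let ?xe = "st eps ?u1 ?u2 t" and ?x = "st eps u1 u2 t" and ?d = "st (\<lambda>t w. 0) v1 v2 t"
  have m: "\<And>t. u1 t \<in> borel_measurable M" "\<And>t. u2 t \<in> borel_measurable M"
    "\<And>t. v1 t \<in> borel_measurable M" "\<And>t. v2 t \<in> borel_measurable M"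
    using L by (auto simp: L2_def)
  have Ld: "L2 M ?d" by (rule st_L2) (use L in \<open>auto simp: L2_zero\<close>)
  have xem: "?xe \<in> borel_measurable M" by (rule st_meas) (use em m in auto)
  have a1: "AE w in M. vc ?xe w = vc (\<lambda>w. ?x w + c *\<^sub>R ?d w) w"
    by (rule G.vce_cong[OF Suc.IH xem]) (use L2_meas[OF Lx] L2_meas[OF Ld] in measurable)
  have a2: "AE w in M. vc (\<lambda>w. ?x w + c *\<^sub>R ?d w) w = vc ?x w + vc (\<lambda>w. c *\<^sub>R ?d w) w"
    by (rule G.vce_add[OF Lx L2_scaleR[OF Ld]])
  have a3: "AE w in M. vc (\<lambda>w. c *\<^sub>R ?d w) w = c *\<^sub>R vc ?d w" by (rule G.vce_scaleR[OF Ld])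
  have b1a: "AE w in M. vc (\<lambda>w. u1 t w + c *\<^sub>R v1 t w) w = vc (u1 t) w + vc (\<lambda>w. c *\<^sub>R v1 t w) w"
    by (rule G.vce_add[OF L(1) L2_scaleR[OF L(3)]])
  have b1b: "AE w in M. vc (\<lambda>w. c *\<^sub>R v1 t w) w = c *\<^sub>R vc (v1 t) w"
    by (rule G.vce_scaleR[OF L(3)])
  have b2a: "AE w in M. vc (\<lambda>w. u2 t w + c *\<^sub>R v2 t w) w = vc (u2 t) w + vc (\<lambda>w. c *\<^sub>R v2 t w) w"
    by (rule G.vce_add[OF L(2) L2_scaleR[OF L(4)]])
  have b2b: "AE w in M. vc (\<lambda>w. c *\<^sub>R v2 t w) w = c *\<^sub>R vc (v2 t) w"
    by (rule G.vce_scaleR[OF L(4)])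
  have b1: "AE w in M. vc (?u1 t) w = vc (u1 t) w + c *\<^sub>R vc (v1 t) w"
    using b1a b1b by eventually_elim simp
  have b2: "AE w in M. vc (?u2 t) w = vc (u2 t) w + c *\<^sub>R vc (v2 t) w"
    using b2a b2b by eventually_elim simp
  from Suc.IH a1 a2 a3 b1 b2 show ?case
  proof eventually_elim
    case (elim w)
    show ?case
      by (simp only: state.simps elim)
         (simp add: matrix_vector_right_distrib matrix_vector_mult_scaleR algebra_simps)
  qed
qed

end



context game
begin

lemma qf_gp:
  assumes "good f" "good g"
  shows "gp (\<lambda>t w. (2 * mat_norm P + mat_norm (P + Pb)) *
     ((norm (f t w))\<^sup>2 + (norm (vc (f t) w))\<^sup>2 + (norm (g t w))\<^sup>2 + (norm (vc (g t) w))\<^sup>2))"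
  by (intro gp_cmult gp_add gp_norm good_vc assms add_nonneg_nonneg mult_nonneg_nonneg mat_norm_nonneg) simp

lemma vc_lin:
  fixes f g h :: "'w \<Rightarrow> real^'k"
  assumes "L2 M f" "L2 M g" "h \<in> borel_measurable M" "AE w in M. h w = f w + c *\<^sub>R g w"
  shows "AE w in M. vc h w = vc f w + c *\<^sub>R vc g w"
proof -
  have a1: "AE w in M. vc h w = vc (\<lambda>w. f w + c *\<^sub>R g w) w"
    by (rule G.vce_cong[OF assms(4) assms(3)]) (use L2_meas[OF assms(1)] L2_meas[OF assms(2)] in measurable)
  have a2: "AE w in M. vc (\<lambda>w. f w + c *\<^sub>R g w) w = vc f w + vc (\<lambda>w. c *\<^sub>R g w) w"
    by (rule G.vce_add[OF assms(1) L2_scaleR[OF assms(2)]])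
  have a3: "AE w in M. vc (\<lambda>w. c *\<^sub>R g w) w = c *\<^sub>R vc g w" by (rule G.vce_scaleR[OF assms(2)])
  from a1 a2 a3 show ?thesis by eventually_elim simp
qed

lemma abs3: "\<bar>a + b - (e::real)\<bar> \<le> \<bar>a\<bar> + \<bar>b\<bar> + \<bar>e\<bar>"
  by arith

lemma rc_bound:
  "\<bar>rc x v1 v2 w\<bar> \<le> \<bar>qf Q Qb x x w\<bar> + \<bar>qf R1 Rb1 v1 v1 w\<bar> + \<bar>qf R2 Rb2 v2 v2 w\<bar>"
  unfolding rc_qf by linarith

lemma J_expand:
  fixes u1 u2 v1 v2 :: "nat \<Rightarrow> 'w \<Rightarrow> real^'l" and eps :: "nat \<Rightarrow> 'w \<Rightarrow> real^'d"
  assumes em: "\<And>t. eps t \<in> borel_measurable M"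
    and gu1: "good u1" and gu2: "good u2" and gv1: "good v1" and gv2: "good v2"
    and gx: "good (st eps u1 u2)" and gd: "good (st (\<lambda>t w. 0) v1 v2)"
  defines "l \<equiv> \<lambda>t w. qf Q Qb (st eps u1 u2 t) (st (\<lambda>t w. 0) v1 v2 t) w + qf R1 Rb1 (u1 t) (v1 t) w
                 - qf R2 Rb2 (u2 t) (v2 t) w"
  shows "JJ eps (\<lambda>t w. u1 t w + c *\<^sub>R v1 t w) (\<lambda>t w. u2 t w + c *\<^sub>R v2 t w)
       = JJ eps u1 u2 + 2 * c * (\<Sum>t. \<gamma>^t * (\<integral>w. l t w \<partial>M))
         + c\<^sup>2 * (\<integral>w. (\<Sum>t. \<gamma>^t * rc (st (\<lambda>t w. 0) v1 v2 t) (v1 t) (v2 t) w) \<partial>M)"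
proof -
  let ?x = "st eps u1 u2" and ?d = "st (\<lambda>t w. 0) v1 v2"
  let ?u1 = "\<lambda>t w. u1 t w + c *\<^sub>R v1 t w" and ?u2 = "\<lambda>t w. u2 t w + c *\<^sub>R v2 t w"
  let ?xe = "st eps ?u1 ?u2"
  define cc where "cc = (\<lambda>t w. rc (?x t) (u1 t) (u2 t) w)"
  define kk where "kk = (\<lambda>t w. rc (?d t) (v1 t) (v2 t) w)"
  have L: "\<And>t. L2 M (u1 t)" "\<And>t. L2 M (u2 t)" "\<And>t. L2 M (v1 t)" "\<And>t. L2 M (v2 t)"
    "\<And>t. L2 M (?x t)" "\<And>t. L2 M (?d t)"
    using gu1 gu2 gv1 gv2 gx gd by (auto intro: good_L2)
  have m[measurable]: "\<And>t. u1 t \<in> borel_measurable M" "\<And>t. u2 t \<in> borel_measurable M"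
    "\<And>t. v1 t \<in> borel_measurable M" "\<And>t. v2 t \<in> borel_measurable M"
    "\<And>t. ?x t \<in> borel_measurable M" "\<And>t. ?d t \<in> borel_measurable M"
    using L by (auto simp: L2_def)
  have m2[measurable]: "\<And>t. ?xe t \<in> borel_measurable M" by (rule st_meas) (use em in auto)
  have em'[measurable]: "\<And>t. eps t \<in> borel_measurable M" by (rule em)
  have gpc: "gp (\<lambda>t w. (2 * mat_norm Q + mat_norm (Q + Qb)) *
     ((norm (?x t w))\<^sup>2 + (norm (vc (?x t) w))\<^sup>2 + (norm (?x t w))\<^sup>2 + (norm (vc (?x t) w))\<^sup>2)
     + (2 * mat_norm R1 + mat_norm (R1 + Rb1)) *
     ((norm (u1 t w))\<^sup>2 + (norm (vc (u1 t) w))\<^sup>2 + (norm (u1 t w))\<^sup>2 + (norm (vc (u1 t) w))\<^sup>2)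
     + (2 * mat_norm R2 + mat_norm (R2 + Rb2)) *
     ((norm (u2 t w))\<^sup>2 + (norm (vc (u2 t) w))\<^sup>2 + (norm (u2 t w))\<^sup>2 + (norm (vc (u2 t) w))\<^sup>2))"
    by (intro gp_add qf_gp gx gu1 gu2)
  have gpk: "gp (\<lambda>t w. (2 * mat_norm Q + mat_norm (Q + Qb)) *
     ((norm (?d t w))\<^sup>2 + (norm (vc (?d t) w))\<^sup>2 + (norm (?d t w))\<^sup>2 + (norm (vc (?d t) w))\<^sup>2)
     + (2 * mat_norm R1 + mat_norm (R1 + Rb1)) *
     ((norm (v1 t w))\<^sup>2 + (norm (vc (v1 t) w))\<^sup>2 + (norm (v1 t w))\<^sup>2 + (norm (vc (v1 t) w))\<^sup>2)
     + (2 * mat_norm R2 + mat_norm (R2 + Rb2)) *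
     ((norm (v2 t w))\<^sup>2 + (norm (vc (v2 t) w))\<^sup>2 + (norm (v2 t w))\<^sup>2 + (norm (vc (v2 t) w))\<^sup>2))"
    by (intro gp_add qf_gp gd gv1 gv2)
  have gpl: "gp (\<lambda>t w. (2 * mat_norm Q + mat_norm (Q + Qb)) *
     ((norm (?x t w))\<^sup>2 + (norm (vc (?x t) w))\<^sup>2 + (norm (?d t w))\<^sup>2 + (norm (vc (?d t) w))\<^sup>2)
     + (2 * mat_norm R1 + mat_norm (R1 + Rb1)) *
     ((norm (u1 t w))\<^sup>2 + (norm (vc (u1 t) w))\<^sup>2 + (norm (v1 t w))\<^sup>2 + (norm (vc (v1 t) w))\<^sup>2)
     + (2 * mat_norm R2 + mat_norm (R2 + Rb2)) *
     ((norm (u2 t w))\<^sup>2 + (norm (vc (u2 t) w))\<^sup>2 + (norm (v2 t w))\<^sup>2 + (norm (vc (v2 t) w))\<^sup>2))"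
    by (intro gp_add qf_gp gx gd gu1 gu2 gv1 gv2)
  have cm: "\<And>t. cc t \<in> borel_measurable M" unfolding cc_def by measurable
  have km: "\<And>t. kk t \<in> borel_measurable M" unfolding kk_def by measurable
  have lm: "\<And>t. l t \<in> borel_measurable M" unfolding l_def by measurable
  have bc: "\<And>t. AE w in M. \<bar>cc t w\<bar> \<le> (2 * mat_norm Q + mat_norm (Q + Qb)) *
     ((norm (?x t w))\<^sup>2 + (norm (vc (?x t) w))\<^sup>2 + (norm (?x t w))\<^sup>2 + (norm (vc (?x t) w))\<^sup>2)
     + (2 * mat_norm R1 + mat_norm (R1 + Rb1)) *
     ((norm (u1 t w))\<^sup>2 + (norm (vc (u1 t) w))\<^sup>2 + (norm (u1 t w))\<^sup>2 + (norm (vc (u1 t) w))\<^sup>2)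
     + (2 * mat_norm R2 + mat_norm (R2 + Rb2)) *
     ((norm (u2 t w))\<^sup>2 + (norm (vc (u2 t) w))\<^sup>2 + (norm (u2 t w))\<^sup>2 + (norm (vc (u2 t) w))\<^sup>2)"
    unfolding cc_def by (intro AE_I2 order_trans[OF rc_bound] add_mono qf_bound)
  have bk: "\<And>t. AE w in M. \<bar>kk t w\<bar> \<le> (2 * mat_norm Q + mat_norm (Q + Qb)) *
     ((norm (?d t w))\<^sup>2 + (norm (vc (?d t) w))\<^sup>2 + (norm (?d t w))\<^sup>2 + (norm (vc (?d t) w))\<^sup>2)
     + (2 * mat_norm R1 + mat_norm (R1 + Rb1)) *
     ((norm (v1 t w))\<^sup>2 + (norm (vc (v1 t) w))\<^sup>2 + (norm (v1 t w))\<^sup>2 + (norm (vc (v1 t) w))\<^sup>2)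
     + (2 * mat_norm R2 + mat_norm (R2 + Rb2)) *
     ((norm (v2 t w))\<^sup>2 + (norm (vc (v2 t) w))\<^sup>2 + (norm (v2 t w))\<^sup>2 + (norm (vc (v2 t) w))\<^sup>2)"
    unfolding kk_def by (intro AE_I2 order_trans[OF rc_bound] add_mono qf_bound)
  have bl: "\<And>t. AE w in M. \<bar>l t w\<bar> \<le> (2 * mat_norm Q + mat_norm (Q + Qb)) *
     ((norm (?x t w))\<^sup>2 + (norm (vc (?x t) w))\<^sup>2 + (norm (?d t w))\<^sup>2 + (norm (vc (?d t) w))\<^sup>2)
     + (2 * mat_norm R1 + mat_norm (R1 + Rb1)) *
     ((norm (u1 t w))\<^sup>2 + (norm (vc (u1 t) w))\<^sup>2 + (norm (v1 t w))\<^sup>2 + (norm (vc (v1 t) w))\<^sup>2)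
     + (2 * mat_norm R2 + mat_norm (R2 + Rb2)) *
     ((norm (u2 t w))\<^sup>2 + (norm (vc (u2 t) w))\<^sup>2 + (norm (v2 t w))\<^sup>2 + (norm (vc (v2 t) w))\<^sup>2)"
    unfolding l_def by (intro AE_I2 order_trans[OF abs3] add_mono qf_bound)
  note Dc = gp_dom[OF cm gpc bc]
  note Dk = gp_dom[OF km gpk bk]
  note Dl = gp_dom[OF lm gpl bl]
  have exp: "\<And>t. AE w in M. rc (?xe t) (?u1 t) (?u2 t) w = cc t w + 2 * c * l t w + c\<^sup>2 * kk t w"
  proof -
    fix t
    have x1: "AE w in M. ?xe t w = ?x t w + c *\<^sub>R ?d t w"
      by (rule st_lin) (use em L in auto)
    have x2: "AE w in M. vc (?xe t) w = vc (?x t) w + c *\<^sub>R vc (?d t) w"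
      by (rule vc_lin[OF L(5) L(6) m2 x1])
    have y1: "AE w in M. vc (?u1 t) w = vc (u1 t) w + c *\<^sub>R vc (v1 t) w"
      by (rule vc_lin[OF L(1) L(3)]) auto
    have y2: "AE w in M. vc (?u2 t) w = vc (u2 t) w + c *\<^sub>R vc (v2 t) w"
      by (rule vc_lin[OF L(2) L(4)]) auto
    from x1 x2 y1 y2 show "AE w in M. rc (?xe t) (?u1 t) (?u2 t) w = cc t w + 2 * c * l t w + c\<^sup>2 * kk t w"
    proof eventually_elim
      case (elim w)
      have e1: "qf Q Qb (?xe t) (?xe t) w = qf Q Qb (?x t) (?x t) w + 2 * c * qf Q Qb (?x t) (?d t) w + c\<^sup>2 * qf Q Qb (?d t) (?d t) w"
        by (rule qf_expand[OF symQ elim(1) elim(2)])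
      have e2: "qf R1 Rb1 (?u1 t) (?u1 t) w = qf R1 Rb1 (u1 t) (u1 t) w + 2 * c * qf R1 Rb1 (u1 t) (v1 t) w + c\<^sup>2 * qf R1 Rb1 (v1 t) (v1 t) w"
        by (rule qf_expand[OF symR(1,2) _ elim(3)]) simp
      have e3: "qf R2 Rb2 (?u2 t) (?u2 t) w = qf R2 Rb2 (u2 t) (u2 t) w + 2 * c * qf R2 Rb2 (u2 t) (v2 t) w + c\<^sup>2 * qf R2 Rb2 (v2 t) (v2 t) w"
        by (rule qf_expand[OF symR(3,4) _ elim(4)]) simp
      show ?case unfolding rc_qf cc_def kk_def l_def e1 e2 e3 by (simp add: algebra_simps)
    qed
  qed
  have expall: "AE w in M. \<forall>t. rc (?xe t) (?u1 t) (?u2 t) w = cc t w + 2 * c * l t w + c\<^sup>2 * kk t w"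
    using exp by (simp add: AE_all_countable)
  have sumeq: "AE w in M. (\<Sum>t. \<gamma>^t * rc (?xe t) (?u1 t) (?u2 t) w)
      = (\<Sum>t. \<gamma>^t * cc t w) + 2 * c * (\<Sum>t. \<gamma>^t * l t w) + c\<^sup>2 * (\<Sum>t. \<gamma>^t * kk t w)"
    using expall Dc(2) Dl(2) Dk(2)
  proof eventually_elim
    case (elim w)
    have "(\<lambda>t. \<gamma>^t * cc t w + 2 * c * (\<gamma>^t * l t w) + c\<^sup>2 * (\<gamma>^t * kk t w)) sums
        ((\<Sum>t. \<gamma>^t * cc t w) + 2 * c * (\<Sum>t. \<gamma>^t * l t w) + c\<^sup>2 * (\<Sum>t. \<gamma>^t * kk t w))"
      by (intro sums_add sums_mult summable_sums elim)
    moreover have "(\<lambda>t. \<gamma>^t * rc (?xe t) (?u1 t) (?u2 t) w) = (\<lambda>t. \<gamma>^t * cc t w + 2 * c * (\<gamma>^t * l t w) + c\<^sup>2 * (\<gamma>^t * kk t w))"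
      using elim(1) by (simp add: algebra_simps)
    ultimately show ?case by (simp add: sums_iff)
  qed
  have "JJ eps ?u1 ?u2 = (\<integral>w. (\<Sum>t. \<gamma>^t * cc t w) + 2 * c * (\<Sum>t. \<gamma>^t * l t w) + c\<^sup>2 * (\<Sum>t. \<gamma>^t * kk t w) \<partial>M)"
    unfolding JJ_def
    by (rule integral_cong_AE[OF _ _ sumeq]) (use Dc(3) Dl(3) Dk(3) in \<open>auto intro: borel_measurable_integrable\<close>)
  also have "\<dots> = (\<integral>w. (\<Sum>t. \<gamma>^t * cc t w) \<partial>M) + 2 * c * (\<integral>w. (\<Sum>t. \<gamma>^t * l t w) \<partial>M) + c\<^sup>2 * (\<integral>w. (\<Sum>t. \<gamma>^t * kk t w) \<partial>M)"
    using Dc(3) Dl(3) Dk(3) by simp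
  also have "(\<integral>w. (\<Sum>t. \<gamma>^t * l t w) \<partial>M) = (\<Sum>t. \<gamma>^t * (\<integral>w. l t w \<partial>M))" by (rule Dl(4))
  finally show ?thesis unfolding JJ_def cc_def kk_def by simp
qed

end



lemma transpose_inner: "(transpose A *v p) \<bullet> d = p \<bullet> (A *v (d::real^'n))"
  for A :: "real^'n^'m" and p :: "real^'m"
  by (simp add: dot_lmul_matrix)

context game
begin

lemma qf_int:
  fixes x y :: "'w \<Rightarrow> real^'n"
  assumes Lx: "L2 M x" and Ly: "L2 M y" and sP: "symm P" "symm Pb"
  shows "(\<integral>w. qf P Pb x y w \<partial>M) = (\<integral>w. (P *v x w + Pb *v vc x w) \<bullet> y w \<partial>M)"
proof -
  have Lxb: "L2 M (vc x)" and Lyb: "L2 M (vc y)" using G.vce_L2 Lx Ly by auto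
  have LPy: "L2 M (\<lambda>w. P *v y w)" "L2 M (\<lambda>w. P *v vc y w)" "L2 M (\<lambda>w. Pb *v vc y w)" "L2 M (\<lambda>w. Pb *v y w)"
    using L2_mat Ly Lyb by auto
  have pw: "\<And>w. qf P Pb x y w = x w \<bullet> (P *v y w) - x w \<bullet> (P *v vc y w) - vc x w \<bullet> (P *v y w)
      + 2 * (vc x w \<bullet> (P *v vc y w)) + vc x w \<bullet> (Pb *v vc y w)"
    by (simp add: qf_def inner_diff_left inner_diff_right matrix_vector_mult_diff_distrib
        matrix_vector_mult_add_rdistrib inner_add_right)
  have i1: "integrable M (\<lambda>w. x w \<bullet> (P *v y w))" by (rule L2_inner[OF Lx LPy(1)])
  have i2: "integrable M (\<lambda>w. x w \<bullet> (P *v vc y w))" by (rule L2_inner[OF Lx LPy(2)])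
  have i3: "integrable M (\<lambda>w. vc x w \<bullet> (P *v y w))" by (rule L2_inner[OF Lxb LPy(1)])
  have i4: "integrable M (\<lambda>w. vc x w \<bullet> (P *v vc y w))" by (rule L2_inner[OF Lxb LPy(2)])
  have i5: "integrable M (\<lambda>w. vc x w \<bullet> (Pb *v vc y w))" by (rule L2_inner[OF Lxb LPy(3)])
  have "(\<integral>w. qf P Pb x y w \<partial>M) = (\<integral>w. x w \<bullet> (P *v y w) \<partial>M) - (\<integral>w. x w \<bullet> (P *v vc y w) \<partial>M)
      - (\<integral>w. vc x w \<bullet> (P *v y w) \<partial>M) + 2 * (\<integral>w. vc x w \<bullet> (P *v vc y w) \<partial>M) + (\<integral>w. vc x w \<bullet> (Pb *v vc y w) \<partial>M)"
    unfolding pw using i1 i2 i3 i4 i5 by simp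
  define K where "K = (\<integral>w. vc x w \<bullet> (P *v y w) \<partial>M)"
  have ePy: "AE w in M. P *v vc y w = vc (\<lambda>w. P *v y w) w" using G.vce_mat[OF Ly, of P] by auto
  have ePby: "AE w in M. Pb *v vc y w = vc (\<lambda>w. Pb *v y w) w" using G.vce_mat[OF Ly, of Pb] by auto
  have c2: "(\<integral>w. x w \<bullet> (P *v vc y w) \<partial>M) = K"
  proof -
    have "(\<integral>w. x w \<bullet> (P *v vc y w) \<partial>M) = (\<integral>w. x w \<bullet> vc (\<lambda>w. P *v y w) w \<partial>M)"
      by (rule integral_cong_AE) (use ePy L2_meas[OF Lx] L2_meas[OF Ly] in auto)
    also have "\<dots> = K" unfolding K_def by (rule G.vce_sym[OF Lx LPy(1)])
    finally show ?thesis .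
  qed
  have c4: "(\<integral>w. vc x w \<bullet> (P *v vc y w) \<partial>M) = K"
  proof -
    have "(\<integral>w. vc x w \<bullet> (P *v vc y w) \<partial>M) = (\<integral>w. vc x w \<bullet> vc (\<lambda>w. P *v y w) w \<partial>M)"
      by (rule integral_cong_AE) (use ePy L2_meas[OF Ly] in auto)
    also have "\<dots> = K" unfolding K_def by (rule G.vce_inner[OF Lxb _ LPy(1)]) simp
    finally show ?thesis .
  qed
  have c5: "(\<integral>w. vc x w \<bullet> (Pb *v vc y w) \<partial>M) = (\<integral>w. vc x w \<bullet> (Pb *v y w) \<partial>M)"
  proof -
    have "(\<integral>w. vc x w \<bullet> (Pb *v vc y w) \<partial>M) = (\<integral>w. vc x w \<bullet> vc (\<lambda>w. Pb *v y w) w \<partial>M)"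
      by (rule integral_cong_AE) (use ePby L2_meas[OF Ly] in auto)
    also have "\<dots> = (\<integral>w. vc x w \<bullet> (Pb *v y w) \<partial>M)" by (rule G.vce_inner[OF Lxb _ LPy(4)]) simp
    finally show ?thesis .
  qed
  have i6: "integrable M (\<lambda>w. vc x w \<bullet> (Pb *v y w))" by (rule L2_inner[OF Lxb LPy(4)])
  have "(\<integral>w. (P *v x w + Pb *v vc x w) \<bullet> y w \<partial>M) = (\<integral>w. x w \<bullet> (P *v y w) + vc x w \<bullet> (Pb *v y w) \<partial>M)"
  proof (rule Bochner_Integration.integral_cong[OF refl])
    fix w
    show "(P *v x w + Pb *v vc x w) \<bullet> y w = x w \<bullet> (P *v y w) + vc x w \<bullet> (Pb *v y w)"
      using symm_inner[OF sP(1), of "x w" "y w"] symm_inner[OF sP(2), of "vc x w" "y w"]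
      by (simp add: inner_add_left inner_add_right inner_commute)
  qed
  also have "\<dots> = (\<integral>w. x w \<bullet> (P *v y w) \<partial>M) + (\<integral>w. vc x w \<bullet> (Pb *v y w) \<partial>M)"
    using i1 i6 by simp
  finally show ?thesis
    using \<open>(\<integral>w. qf P Pb x y w \<partial>M) = _\<close> c2 c4 c5 K_def by simp
qed

end



context game
begin

lemma qf_integrable:
  fixes x y :: "'w \<Rightarrow> real^'n"
  assumes Lx: "L2 M x" and Ly: "L2 M y"
  shows "integrable M (qf P Pb x y)"
proof (rule Bochner_Integration.integrable_bound[where f="\<lambda>w. (2 * mat_norm P + mat_norm (P + Pb)) *
     ((norm (x w))\<^sup>2 + (norm (vc x w))\<^sup>2 + (norm (y w))\<^sup>2 + (norm (vc y w))\<^sup>2)"])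
  have Lxb: "L2 M (vc x)" and Lyb: "L2 M (vc y)" using G.vce_L2 Lx Ly by auto
  show "integrable M (\<lambda>w. (2 * mat_norm P + mat_norm (P + Pb)) *
     ((norm (x w))\<^sup>2 + (norm (vc x w))\<^sup>2 + (norm (y w))\<^sup>2 + (norm (vc y w))\<^sup>2))"
    using L2_sq[OF Lx] L2_sq[OF Ly] L2_sq[OF Lxb] L2_sq[OF Lyb] by simp
  show "qf P Pb x y \<in> borel_measurable M" using L2_meas[OF Lx] L2_meas[OF Ly] by measurable
  show "AE w in M. norm (qf P Pb x y w) \<le> norm ((2 * mat_norm P + mat_norm (P + Pb)) *
     ((norm (x w))\<^sup>2 + (norm (vc x w))\<^sup>2 + (norm (y w))\<^sup>2 + (norm (vc y w))\<^sup>2))"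
    using qf_bound[of P Pb x y] by (intro AE_I2) (simp add: order_trans[OF _ abs_ge_self])
qed

lemma pB_int:
  fixes p :: "'w \<Rightarrow> real^'d" and v :: "'w \<Rightarrow> real^'l" and B Bb :: "real^'l^'d"
  assumes Lp: "L2 M p" and Lv: "L2 M v"
  shows "(\<integral>w. p w \<bullet> (B *v v w + Bb *v vc v w) \<partial>M) = (\<integral>w. (transpose B *v p w + transpose Bb *v vc p w) \<bullet> v w \<partial>M)"
proof -
  have Lvb: "L2 M (vc v)" and Lpb: "L2 M (vc p)" using G.vce_L2 Lp Lv by auto
  have "(\<integral>w. p w \<bullet> (B *v v w + Bb *v vc v w) \<partial>M) = (\<integral>w. p w \<bullet> (B *v v w) \<partial>M) + (\<integral>w. p w \<bullet> (Bb *v vc v w) \<partial>M)"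
    using L2_inner[OF Lp L2_mat[OF Lv]] L2_inner[OF Lp L2_mat[OF Lvb]] by (simp add: inner_add_right)
  also have "(\<integral>w. p w \<bullet> (Bb *v vc v w) \<partial>M) = (\<integral>w. p w \<bullet> vc (\<lambda>w. Bb *v v w) w \<partial>M)"
    by (rule integral_cong_AE) (use G.vce_mat[OF Lv, of Bb] L2_meas[OF Lp] L2_meas[OF Lv] in auto)
  also have "\<dots> = (\<integral>w. vc p w \<bullet> (Bb *v v w) \<partial>M)" by (rule G.vce_sym[OF Lp L2_mat[OF Lv]])
  also have "(\<integral>w. p w \<bullet> (B *v v w) \<partial>M) + (\<integral>w. vc p w \<bullet> (Bb *v v w) \<partial>M)
      = (\<integral>w. (transpose B *v p w + transpose Bb *v vc p w) \<bullet> v w \<partial>M)"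
  proof -
    have "(\<integral>w. (transpose B *v p w + transpose Bb *v vc p w) \<bullet> v w \<partial>M)
        = (\<integral>w. p w \<bullet> (B *v v w) + vc p w \<bullet> (Bb *v v w) \<partial>M)"
      by (rule Bochner_Integration.integral_cong[OF refl]) (simp add: inner_add_left dot_lmul_matrix)
    also have "\<dots> = (\<integral>w. p w \<bullet> (B *v v w) \<partial>M) + (\<integral>w. vc p w \<bullet> (Bb *v v w) \<partial>M)"
      using L2_inner[OF Lp L2_mat[OF Lv]] L2_inner[OF Lpb L2_mat[OF Lv]] by simp
    finally show ?thesis by simp
  qed
  finally show ?thesis .
qed

end

locale eqm = game M G F \<gamma> A Ab Q Qb B1 Bb1 B2 Bb2 R1 Rb1 R2 Rb2
  for M :: "'w measure" and G F \<gamma> and A Ab Q Qb :: "real^'d^'d" and B1 Bb1 B2 Bb2 :: "real^'l^'d"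
    and R1 Rb1 R2 Rb2 :: "real^'l^'l" +
  fixes eps :: "nat \<Rightarrow> 'w \<Rightarrow> real^'d" and u1 u2 :: "nat \<Rightarrow> 'w \<Rightarrow> real^'l" and p :: "nat \<Rightarrow> 'w \<Rightarrow> real^'d"
  assumes em: "\<And>t. eps t \<in> borel_measurable M"
    and pc1: "proc_class M F \<gamma> u1" and pc2: "proc_class M F \<gamma> u2"
    and pcx: "proc_class M F \<gamma> (st eps u1 u2)" and pcp: "proc_class M F \<gamma> p"
    and adj: "\<And>t. AE w in M. p t w = \<gamma> *\<^sub>R vcond_exp M (F t)
         (\<lambda>v. transpose A *v p (Suc t) v + 2 *\<^sub>R (Q *v st eps u1 u2 (Suc t) v)
            + transpose Ab *v vcond_exp M G (p (Suc t)) v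
            + 2 *\<^sub>R (Qb *v vcond_exp M G (st eps u1 u2 (Suc t)) v)) w"
begin

lemma gu1: "good u1" and gu2: "good u2" and gx: "good (st eps u1 u2)" and gp': "good p"
  using pc_good pc1 pc2 pcx pcp by auto

lemma aeF_d:
  assumes vF: "\<And>t. v1 t \<in> borel_measurable (F t)" "\<And>t. v2 t \<in> borel_measurable (F t)"
    and Lv: "\<And>t. L2 M (v1 t)" "\<And>t. L2 M (v2 t)"
  shows "aeF t (st (\<lambda>t w. 0) v1 v2 t)" "aeF t (st (\<lambda>t w. 0) v1 v2 (Suc t))"
proof -
  let ?d = "st (\<lambda>t w. 0) v1 v2"
  have Ld: "\<And>t. L2 M (?d t)" by (rule st_L2) (use Lv in \<open>auto simp: L2_zero\<close>)
  have step: "aeF t (?d (Suc t))" if h: "aeF t (?d t)" for t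
  proof -
    have "aeF t (\<lambda>w. A *v ?d t w + Ab *v vc (?d t) w + B1 *v v1 t w + Bb1 *v vc (v1 t) w
        + B2 *v v2 t w + Bb2 *v vc (v2 t) w + 0)"
      by (intro aeF_add aeF_mat aeF_vc aeF_meas h Ld Lv vF) simp
    then show ?thesis by simp
  qed
  have "aeF t (?d t)" for t
  proof (induction t)
    case 0 show ?case by (simp add: aeF_meas)
  next
    case (Suc t) show ?case by (rule aeF_mono[OF _ step[OF Suc]]) simp
  qed
  then show "aeF t (?d t)" "aeF t (?d (Suc t))" using step by auto
qed

end



context eqm
begin

lemma gradient:
  fixes v1 v2 :: "nat \<Rightarrow> 'w \<Rightarrow> real^'l"
  assumes vF: "\<And>t. v1 t \<in> borel_measurable (F t)" "\<And>t. v2 t \<in> borel_measurable (F t)"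
    and Lv: "\<And>t. L2 M (v1 t)" "\<And>t. L2 M (v2 t)"
    and zero: "\<And>t. t \<noteq> s \<Longrightarrow> v1 t = (\<lambda>w. 0)" "\<And>t. t \<noteq> s \<Longrightarrow> v2 t = (\<lambda>w. 0)"
    and gd: "good (st (\<lambda>t w. 0) v1 v2)"
  defines "l \<equiv> \<lambda>t w. qf Q Qb (st eps u1 u2 t) (st (\<lambda>t w. 0) v1 v2 t) w + qf R1 Rb1 (u1 t) (v1 t) w
                 - qf R2 Rb2 (u2 t) (v2 t) w"
  shows "(\<lambda>t. \<gamma>^t * (\<integral>w. l t w \<partial>M)) sums (\<gamma>^s / 2 * ((\<integral>w. (transpose B1 *v p s w + 2 *\<^sub>R (R1 *v u1 s w)
                 + transpose Bb1 *v vc (p s) w + 2 *\<^sub>R (Rb1 *v vc (u1 s) w)) \<bullet> v1 s w \<partial>M)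
          + (\<integral>w. (transpose B2 *v p s w - 2 *\<^sub>R (R2 *v u2 s w)
                 + transpose Bb2 *v vc (p s) w - 2 *\<^sub>R (Rb2 *v vc (u2 s) w)) \<bullet> v2 s w \<partial>M)))"
proof -
  let ?x = "st eps u1 u2" and ?d = "st (\<lambda>t w. 0) v1 v2"
  have Lx: "\<And>t. L2 M (?x t)" and Lp: "\<And>t. L2 M (p t)" and Lu1: "\<And>t. L2 M (u1 t)" and Lu2: "\<And>t. L2 M (u2 t)"
    using gx gp' gu1 gu2 by (auto intro: good_L2)
  have Ld: "\<And>t. L2 M (?d t)" using gd by (auto intro: good_L2)
  have dm[measurable]: "\<And>t. ?d t \<in> borel_measurable M" using Ld by (auto simp: L2_def)
  have pm[measurable]: "\<And>t. p t \<in> borel_measurable M" using Lp by (auto simp: L2_def)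
  have Lvc: "\<And>f::'w \<Rightarrow> real^'d. L2 M f \<Longrightarrow> L2 M (vc f)" "\<And>f::'w \<Rightarrow> real^'l. L2 M f \<Longrightarrow> L2 M (vc f)"
    using G.vce_L2 by auto
  define Z where "Z = (\<lambda>t v. transpose A *v p (Suc t) v + 2 *\<^sub>R (Q *v ?x (Suc t) v)
            + transpose Ab *v vc (p (Suc t)) v + 2 *\<^sub>R (Qb *v vc (?x (Suc t)) v))"
  have LZ: "\<And>t. L2 M (Z t)" unfolding Z_def
    by (intro L2_add L2_mat L2_scaleR Lvc Lp Lx)
  define Y where "Y = (\<lambda>t. \<integral>w. p t w \<bullet> (A *v ?d t w + Ab *v vc (?d t) w) \<partial>M)"
  define S where "S = (\<lambda>t. \<integral>w. (2 *\<^sub>R (Q *v ?x t w) + 2 *\<^sub>R (Qb *v vc (?x t) w)) \<bullet> ?d t w \<partial>M)"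
  define W where "W = (\<lambda>t. \<integral>w. p t w \<bullet> (B1 *v v1 t w + Bb1 *v vc (v1 t) w + (B2 *v v2 t w + Bb2 *v vc (v2 t) w)) \<partial>M)"
  define V where "V = (\<lambda>t. (\<integral>w. (R1 *v u1 t w + Rb1 *v vc (u1 t) w) \<bullet> v1 t w \<partial>M)
                          - (\<integral>w. (R2 *v u2 t w + Rb2 *v vc (u2 t) w) \<bullet> v2 t w \<partial>M))"
  have LAd: "\<And>t. L2 M (\<lambda>w. A *v ?d t w + Ab *v vc (?d t) w)" by (intro L2_add L2_mat Lvc Ld)
  have LBv: "\<And>t. L2 M (\<lambda>w. B1 *v v1 t w + Bb1 *v vc (v1 t) w + (B2 *v v2 t w + Bb2 *v vc (v2 t) w))"
    by (intro L2_add L2_mat Lvc Lv)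
  have LQx: "\<And>t. L2 M (\<lambda>w. 2 *\<^sub>R (Q *v ?x t w) + 2 *\<^sub>R (Qb *v vc (?x t) w))"
    by (intro L2_add L2_mat L2_scaleR Lvc Lx)
  have T1: "(\<integral>w. p t w \<bullet> ?d (Suc t) w \<partial>M) = \<gamma> * (\<integral>w. Z t w \<bullet> ?d (Suc t) w \<partial>M)" for t
  proof -
    have aeq: "AE w in M. p t w \<bullet> ?d (Suc t) w = (\<gamma> *\<^sub>R vcond_exp M (F t) (Z t) w) \<bullet> ?d (Suc t) w"
      using adj[of t] by eventually_elim (simp only: Z_def)
    have "(\<integral>w. p t w \<bullet> ?d (Suc t) w \<partial>M) = (\<integral>w. (\<gamma> *\<^sub>R vcond_exp M (F t) (Z t) w) \<bullet> ?d (Suc t) w \<partial>M)"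
      by (rule integral_cong_AE[OF _ _ aeq]) measurable
    also have "\<dots> = \<gamma> * (\<integral>w. ?d (Suc t) w \<bullet> vcond_exp M (F t) (Z t) w \<partial>M)"
      by (simp add: inner_commute)
    also have "(\<integral>w. ?d (Suc t) w \<bullet> vcond_exp M (F t) (Z t) w \<partial>M) = (\<integral>w. ?d (Suc t) w \<bullet> Z t w \<partial>M)"
      by (rule cond_F_inner[OF aeF_d(2)[OF vF Lv] Ld LZ])
    finally show ?thesis by (simp add: inner_commute)
  qed
  have T2: "(\<integral>w. Z t w \<bullet> ?d (Suc t) w \<partial>M) = Y (Suc t) + S (Suc t)" for t
  proof -
    let ?p = "p (Suc t)" and ?dd = "?d (Suc t)" and ?xx = "?x (Suc t)"
    have pw: "\<And>w. Z t w \<bullet> ?dd w = ?p w \<bullet> (A *v ?dd w) + vc ?p w \<bullet> (Ab *v ?dd w)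
        + (2 *\<^sub>R (Q *v ?xx w) + 2 *\<^sub>R (Qb *v vc ?xx w)) \<bullet> ?dd w"
      unfolding Z_def by (simp add: inner_add_left dot_lmul_matrix)
    have i1: "integrable M (\<lambda>w. ?p w \<bullet> (A *v ?dd w))" by (intro L2_inner L2_mat Lp Ld)
    have i2: "integrable M (\<lambda>w. vc ?p w \<bullet> (Ab *v ?dd w))" by (intro L2_inner L2_mat Lp Ld Lvc)
    have i3: "integrable M (\<lambda>w. (2 *\<^sub>R (Q *v ?xx w) + 2 *\<^sub>R (Qb *v vc ?xx w)) \<bullet> ?dd w)"
      by (intro L2_inner LQx Ld)
    have i4: "integrable M (\<lambda>w. ?p w \<bullet> (Ab *v vc ?dd w))" by (intro L2_inner L2_mat Lp Ld Lvc)
    have e2: "(\<integral>w. vc ?p w \<bullet> (Ab *v ?dd w) \<partial>M) = (\<integral>w. ?p w \<bullet> (Ab *v vc ?dd w) \<partial>M)"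
    proof -
      have "(\<integral>w. vc ?p w \<bullet> (Ab *v ?dd w) \<partial>M) = (\<integral>w. ?p w \<bullet> vc (\<lambda>w. Ab *v ?dd w) w \<partial>M)"
        by (rule G.vce_sym[OF Lp L2_mat[OF Ld], symmetric])
      also have "\<dots> = (\<integral>w. ?p w \<bullet> (Ab *v vc ?dd w) \<partial>M)"
      proof (rule integral_cong_AE)
        show "AE w in M. ?p w \<bullet> vc (\<lambda>w. Ab *v ?dd w) w = ?p w \<bullet> (Ab *v vc ?dd w)"
          using G.vce_mat[OF Ld[of "Suc t"], of Ab] by eventually_elim (simp only:)
      qed measurable
      finally show ?thesis .
    qed
    have "(\<integral>w. Z t w \<bullet> ?dd w \<partial>M) = (\<integral>w. ?p w \<bullet> (A *v ?dd w) \<partial>M) + (\<integral>w. vc ?p w \<bullet> (Ab *v ?dd w) \<partial>M)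
        + (\<integral>w. (2 *\<^sub>R (Q *v ?xx w) + 2 *\<^sub>R (Qb *v vc ?xx w)) \<bullet> ?dd w \<partial>M)"
      unfolding pw using i1 i2 i3 by simp
    also have "\<dots> = Y (Suc t) + S (Suc t)"
      unfolding Y_def S_def e2 using i1 i4 by (simp add: inner_add_right)
    finally show ?thesis .
  qed
  have T3: "(\<integral>w. p t w \<bullet> ?d (Suc t) w \<partial>M) = Y t + W t" for t
  proof -
    have pw: "\<And>w. p t w \<bullet> ?d (Suc t) w = p t w \<bullet> (A *v ?d t w + Ab *v vc (?d t) w)
        + p t w \<bullet> (B1 *v v1 t w + Bb1 *v vc (v1 t) w + (B2 *v v2 t w + Bb2 *v vc (v2 t) w))"
      by (simp add: inner_add_right)
    show ?thesis unfolding pw Y_def W_def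
      using L2_inner[OF Lp LAd] L2_inner[OF Lp LBv] by simp
  qed
  have rec: "Y t + W t = \<gamma> * (Y (Suc t) + S (Suc t))" for t
    using T1[of t] T2[of t] T3[of t] by simp
  have d0: "?d 0 = (\<lambda>w. 0)" by simp
  have vc0: "AE w in M. vc (?d 0) w = 0"
    using G.vce_Fmeas[OF L2_zero, where 'k='d] by (simp add: d0)
  have Y0: "Y 0 = 0"
  proof -
    have "Y 0 = (\<integral>w. 0 \<partial>M)"
      unfolding Y_def by (rule integral_cong_AE) (use vc0 L2_meas[OF Lp] in \<open>auto simp: d0\<close>)
    then show ?thesis by simp
  qed
  have S0: "S 0 = 0" unfolding S_def by (simp add: d0)
  have tele: "(\<Sum>t<n. \<gamma>^t * W t) = \<gamma>^n * Y n + (\<Sum>t<Suc n. \<gamma>^t * S t)" for n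
  proof (induction n)
    case 0 then show ?case by (simp add: Y0 S0)
  next
    case (Suc n)
    have "(\<Sum>t<Suc n. \<gamma>^t * W t) = \<gamma>^n * Y n + (\<Sum>t<Suc n. \<gamma>^t * S t) + \<gamma>^n * W n"
      using Suc by simp
    also have "\<dots> = \<gamma>^n * (Y n + W n) + (\<Sum>t<Suc n. \<gamma>^t * S t)" by (simp add: algebra_simps)
    also have "\<dots> = \<gamma>^Suc n * Y (Suc n) + (\<Sum>t<Suc (Suc n). \<gamma>^t * S t)"
      unfolding rec by (simp add: algebra_simps)
    finally show ?case .
  qed
  have W0: "t \<noteq> s \<Longrightarrow> W t = 0" for t
  proof -
    assume ts: "t \<noteq> s"
    have z1: "AE w in M. vc (v1 t) w = 0" using G.vce_Fmeas[OF L2_zero, where 'k='l] zero(1)[OF ts] by simp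
    have z2: "AE w in M. vc (v2 t) w = 0" using G.vce_Fmeas[OF L2_zero, where 'k='l] zero(2)[OF ts] by simp
    have "W t = (\<integral>w. 0 \<partial>M)"
      unfolding W_def by (rule integral_cong_AE) (use z1 z2 L2_meas[OF Lp] zero[OF ts] in auto)
    then show ?thesis by simp
  qed
  have Wsum: "s < n \<Longrightarrow> (\<Sum>t<n. \<gamma>^t * W t) = \<gamma>^s * W s" for n
  proof -
    assume sn: "s < n"
    have "(\<Sum>t<n. \<gamma>^t * W t) = (\<Sum>t<n. if t = s then \<gamma>^s * W s else 0)"
      by (rule sum.cong) (auto simp: W0)
    also have "\<dots> = \<gamma>^s * W s" using sn by (simp add: sum.delta)
    finally show ?thesis .
  qed
  have Ylim: "(\<lambda>n. \<gamma>^n * Y n) \<longlonglongrightarrow> 0"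
  proof (rule Lim_null_comparison)
    have gAd: "good (\<lambda>t w. A *v ?d t w + Ab *v vc (?d t) w)"
      by (intro good_add good_mat good_vc gd)
    let ?g = "\<lambda>n. \<gamma>^n * (\<integral>w. (norm (p n w))\<^sup>2 \<partial>M) + \<gamma>^n * (\<integral>w. (norm (A *v ?d n w + Ab *v vc (?d n) w))\<^sup>2 \<partial>M)"
    show "?g \<longlonglongrightarrow> 0"
      using summable_LIMSEQ_zero[OF good_summable[OF gp']] summable_LIMSEQ_zero[OF good_summable[OF gAd]]
      by (rule tendsto_add_zero)
    show "\<forall>\<^sub>F n in sequentially. norm (\<gamma>^n * Y n) \<le> ?g n"
    proof (intro always_eventually allI)
      fix n
      have "\<bar>Y n\<bar> \<le> (\<integral>w. \<bar>p n w \<bullet> (A *v ?d n w + Ab *v vc (?d n) w)\<bar> \<partial>M)"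
        unfolding Y_def by (rule integral_abs_bound)
      also have "\<dots> \<le> (\<integral>w. (norm (p n w))\<^sup>2 + (norm (A *v ?d n w + Ab *v vc (?d n) w))\<^sup>2 \<partial>M)"
        by (rule integral_mono) (use L2_inner[OF Lp LAd] L2_sq[OF Lp] L2_sq[OF LAd] abs_inner_le_sq in auto)
      also have "\<dots> = (\<integral>w. (norm (p n w))\<^sup>2 \<partial>M) + (\<integral>w. (norm (A *v ?d n w + Ab *v vc (?d n) w))\<^sup>2 \<partial>M)"
        using L2_sq[OF Lp] L2_sq[OF LAd] by simp
      finally have "\<bar>Y n\<bar> \<le> \<dots>" .
      then show "norm (\<gamma>^n * Y n) \<le> ?g n"
        using gpos by (simp add: abs_mult distrib_left[symmetric] mult_left_mono)
    qed
  qed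
  have Ssums: "(\<lambda>t. \<gamma>^t * S t) sums (\<gamma>^s * W s)"
  proof -
    have ev: "\<forall>\<^sub>F n in sequentially. (\<Sum>t<Suc n. \<gamma>^t * S t) = \<gamma>^s * W s - \<gamma>^n * Y n"
    proof (rule eventually_sequentiallyI[of "Suc s"])
      fix n assume "Suc s \<le> n"
      then have "s < n" by simp
      then show "(\<Sum>t<Suc n. \<gamma>^t * S t) = \<gamma>^s * W s - \<gamma>^n * Y n" using tele[of n] Wsum[of n] by simp
    qed
    have "(\<lambda>n. \<gamma>^s * W s - \<gamma>^n * Y n) \<longlonglongrightarrow> \<gamma>^s * W s - 0"
      by (intro tendsto_diff tendsto_const Ylim)
    then have "(\<lambda>n. \<Sum>t<Suc n. \<gamma>^t * S t) \<longlonglongrightarrow> \<gamma>^s * W s"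
      using ev by (simp add: tendsto_cong)
    then show ?thesis unfolding sums_def by (rule LIMSEQ_imp_Suc)
  qed
  have lint: "(\<integral>w. l t w \<partial>M) = S t / 2 + V t" for t
  proof -
    have "(\<integral>w. l t w \<partial>M) = (\<integral>w. qf Q Qb (?x t) (?d t) w \<partial>M) + (\<integral>w. qf R1 Rb1 (u1 t) (v1 t) w \<partial>M)
        - (\<integral>w. qf R2 Rb2 (u2 t) (v2 t) w \<partial>M)"
      unfolding l_def using qf_integrable[OF Lx Ld] qf_integrable[OF Lu1 Lv(1)] qf_integrable[OF Lu2 Lv(2)]
      by simp
    also have "(\<integral>w. qf Q Qb (?x t) (?d t) w \<partial>M) = (\<integral>w. (Q *v ?x t w + Qb *v vc (?x t) w) \<bullet> ?d t w \<partial>M)"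
      by (rule qf_int[OF Lx Ld symQ])
    also have "\<dots> = S t / 2"
    proof -
      have "S t = (\<integral>w. 2 * ((Q *v ?x t w + Qb *v vc (?x t) w) \<bullet> ?d t w) \<partial>M)"
        unfolding S_def by (rule Bochner_Integration.integral_cong[OF refl]) (simp add: inner_add_left)
      then show ?thesis by simp
    qed
    also have "(\<integral>w. qf R1 Rb1 (u1 t) (v1 t) w \<partial>M) = (\<integral>w. (R1 *v u1 t w + Rb1 *v vc (u1 t) w) \<bullet> v1 t w \<partial>M)"
      by (rule qf_int[OF Lu1 Lv(1) symR(1,2)])
    also have "(\<integral>w. qf R2 Rb2 (u2 t) (v2 t) w \<partial>M) = (\<integral>w. (R2 *v u2 t w + Rb2 *v vc (u2 t) w) \<bullet> v2 t w \<partial>M)"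
      by (rule qf_int[OF Lu2 Lv(2) symR(3,4)])
    finally show ?thesis unfolding V_def by simp
  qed
  have V0: "t \<noteq> s \<Longrightarrow> V t = 0" for t unfolding V_def using zero by simp
  have Vsums: "(\<lambda>t. \<gamma>^t * V t) sums (\<gamma>^s * V s)"
  proof -
    have "(\<lambda>t. \<gamma>^t * V t) = (\<lambda>t. if t = s then \<gamma>^t * V t else 0)" using V0 by auto
    then show ?thesis using sums_single[of s "\<lambda>t. \<gamma>^t * V t"] by simp
  qed
  have Lsums: "(\<lambda>t. \<gamma>^t * (\<integral>w. l t w \<partial>M)) sums (\<gamma>^s * W s / 2 + \<gamma>^s * V s)"
  proof -
    have "(\<lambda>t. \<gamma>^t * S t / 2 + \<gamma>^t * V t) sums (\<gamma>^s * W s / 2 + \<gamma>^s * V s)"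
      by (intro sums_add sums_divide Ssums Vsums)
    then show ?thesis by (simp add: lint algebra_simps)
  qed
  have Ws: "W s = (\<integral>w. (transpose B1 *v p s w + transpose Bb1 *v vc (p s) w) \<bullet> v1 s w \<partial>M)
      + (\<integral>w. (transpose B2 *v p s w + transpose Bb2 *v vc (p s) w) \<bullet> v2 s w \<partial>M)"
  proof -
    have "W s = (\<integral>w. p s w \<bullet> (B1 *v v1 s w + Bb1 *v vc (v1 s) w) \<partial>M) + (\<integral>w. p s w \<bullet> (B2 *v v2 s w + Bb2 *v vc (v2 s) w) \<partial>M)"
      unfolding W_def using L2_inner[OF Lp L2_add[OF L2_mat[OF Lv(1)] L2_mat[OF Lvc(2)[OF Lv(1)]]]]
        L2_inner[OF Lp L2_add[OF L2_mat[OF Lv(2)] L2_mat[OF Lvc(2)[OF Lv(2)]]]]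
      by (simp add: inner_add_right)
    then show ?thesis using pB_int[OF Lp Lv(1)] pB_int[OF Lp Lv(2)] by simp
  qed
  let ?g1 = "\<lambda>w. transpose B1 *v p s w + 2 *\<^sub>R (R1 *v u1 s w) + transpose Bb1 *v vc (p s) w + 2 *\<^sub>R (Rb1 *v vc (u1 s) w)"
  let ?g2 = "\<lambda>w. transpose B2 *v p s w - 2 *\<^sub>R (R2 *v u2 s w) + transpose Bb2 *v vc (p s) w - 2 *\<^sub>R (Rb2 *v vc (u2 s) w)"
  have LB1: "L2 M (\<lambda>w. transpose B1 *v p s w + transpose Bb1 *v vc (p s) w)" by (intro L2_add L2_mat Lvc Lp)
  have LB2: "L2 M (\<lambda>w. transpose B2 *v p s w + transpose Bb2 *v vc (p s) w)" by (intro L2_add L2_mat Lvc Lp)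
  have LR1: "L2 M (\<lambda>w. R1 *v u1 s w + Rb1 *v vc (u1 s) w)" by (intro L2_add L2_mat Lvc Lu1)
  have LR2: "L2 M (\<lambda>w. R2 *v u2 s w + Rb2 *v vc (u2 s) w)" by (intro L2_add L2_mat Lvc Lu2)
  have G1: "(\<integral>w. ?g1 w \<bullet> v1 s w \<partial>M) = (\<integral>w. (transpose B1 *v p s w + transpose Bb1 *v vc (p s) w) \<bullet> v1 s w \<partial>M)
      + 2 * (\<integral>w. (R1 *v u1 s w + Rb1 *v vc (u1 s) w) \<bullet> v1 s w \<partial>M)"
  proof -
    have "(\<integral>w. ?g1 w \<bullet> v1 s w \<partial>M) = (\<integral>w. (transpose B1 *v p s w + transpose Bb1 *v vc (p s) w) \<bullet> v1 s w
        + 2 * ((R1 *v u1 s w + Rb1 *v vc (u1 s) w) \<bullet> v1 s w) \<partial>M)"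
      by (rule Bochner_Integration.integral_cong[OF refl]) (simp add: inner_add_left algebra_simps)
    then show ?thesis using L2_inner[OF LB1 Lv(1)] L2_inner[OF LR1 Lv(1)] by simp
  qed
  have G2: "(\<integral>w. ?g2 w \<bullet> v2 s w \<partial>M) = (\<integral>w. (transpose B2 *v p s w + transpose Bb2 *v vc (p s) w) \<bullet> v2 s w \<partial>M)
      - 2 * (\<integral>w. (R2 *v u2 s w + Rb2 *v vc (u2 s) w) \<bullet> v2 s w \<partial>M)"
  proof -
    have "(\<integral>w. ?g2 w \<bullet> v2 s w \<partial>M) = (\<integral>w. (transpose B2 *v p s w + transpose Bb2 *v vc (p s) w) \<bullet> v2 s w
        - 2 * ((R2 *v u2 s w + Rb2 *v vc (u2 s) w) \<bullet> v2 s w) \<partial>M)"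
      by (rule Bochner_Integration.integral_cong[OF refl]) (simp add: inner_add_left inner_diff_left algebra_simps)
    then show ?thesis using L2_inner[OF LB2 Lv(2)] L2_inner[OF LR2 Lv(2)] by simp
  qed
  have E: "\<gamma>^s * W s / 2 + \<gamma>^s * V s = \<gamma>^s / 2 * ((\<integral>w. ?g1 w \<bullet> v1 s w \<partial>M) + (\<integral>w. ?g2 w \<bullet> v2 s w \<partial>M))"
    unfolding G1 G2 Ws V_def by (simp add: algebra_simps)
  show ?thesis using Lsums unfolding E .
qed

end



declare state.simps(2)[simp del]

lemma quad_zero:
  fixes L K :: real
  assumes h: "\<And>c. 0 \<le> 2 * c * L + c\<^sup>2 * K"
  shows "L = 0"
proof (rule ccontr)
  assume L0: "L \<noteq> 0"
  define D where "D = \<bar>K\<bar> + 1"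
  have D0: "D > 0" unfolding D_def by simp
  define c where "c = - L / D"
  have "0 \<le> 2 * c * L + c\<^sup>2 * K" by (rule h)
  also have "2 * c * L + c\<^sup>2 * K = (L\<^sup>2 * K - 2 * L\<^sup>2 * D) / D\<^sup>2"
    unfolding c_def using D0 by (simp add: field_simps power2_eq_square)
  finally have "0 \<le> (L\<^sup>2 * K - 2 * L\<^sup>2 * D) / D\<^sup>2" .
  then have a: "0 \<le> L\<^sup>2 * K - 2 * L\<^sup>2 * D" using D0 by (simp add: zero_le_divide_iff)
  have "L\<^sup>2 * K \<le> L\<^sup>2 * \<bar>K\<bar>" by (intro mult_left_mono) auto
  then have "L\<^sup>2 * K \<le> L\<^sup>2 * D - L\<^sup>2" unfolding D_def by (simp add: algebra_simps)
  moreover have "0 \<le> L\<^sup>2 * D" using D0 by simp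
  ultimately have "L\<^sup>2 \<le> 0" using a by linarith
  then show False using L0 by simp
qed

context game
begin

lemma d_good:
  fixes v1 v2 :: "nat \<Rightarrow> 'w \<Rightarrow> real^'l"
  assumes Lv: "\<And>t. L2 M (v1 t)" "\<And>t. L2 M (v2 t)"
    and zero: "\<And>t. t \<noteq> s \<Longrightarrow> v1 t = (\<lambda>w. 0)" "\<And>t. t \<noteq> s \<Longrightarrow> v2 t = (\<lambda>w. 0)"
  shows "good (st (\<lambda>t w. 0) v1 v2)"
proof -
  let ?d = "st (\<lambda>t w. 0) v1 v2"
  have Ld: "\<And>t. L2 M (?d t)" by (rule st_L2) (use Lv in \<open>auto simp: L2_zero\<close>)
  have Lm: "\<And>t. L2 M (vc (?d t))" using G.vce_L2 Ld by auto
  have dm: "\<And>t. ?d t \<in> borel_measurable M" using Ld by (auto simp: L2_def)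
  define a1 where "a1 = mat_norm A"
  define a2 where "a2 = mat_norm (A + Ab)"
  have stp: "AE w in M. vc (?d (Suc t)) w = (A + Ab) *v vc (?d t) w \<and>
      ?d (Suc t) w - vc (?d (Suc t)) w = A *v (?d t w - vc (?d t) w)" if ts: "s < t" for t
  proof -
    have z1: "AE w in M. vc (v1 t) w = 0" using G.vce_Fmeas[OF L2_zero, where 'k='l] zero(1)[of t] ts by simp
    have z2: "AE w in M. vc (v2 t) w = 0" using G.vce_Fmeas[OF L2_zero, where 'k='l] zero(2)[of t] ts by simp
    have e1: "AE w in M. ?d (Suc t) w = A *v ?d t w + Ab *v vc (?d t) w"
      using z1 z2 by eventually_elim (use zero ts in \<open>simp add: state.simps(2)\<close>)
    have e2: "AE w in M. vc (?d (Suc t)) w = vc (\<lambda>w. A *v ?d t w + Ab *v vc (?d t) w) w"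
      by (rule G.vce_cong[OF e1 dm]) (use dm in measurable)
    have e3: "AE w in M. vc (\<lambda>w. A *v ?d t w + Ab *v vc (?d t) w) w
        = vc (\<lambda>w. A *v ?d t w) w + vc (\<lambda>w. Ab *v vc (?d t) w) w"
      by (rule G.vce_add[OF L2_mat[OF Ld] L2_mat[OF Lm]])
    have e4: "AE w in M. vc (\<lambda>w. A *v ?d t w) w = A *v vc (?d t) w" by (rule G.vce_mat[OF Ld])
    have e5: "AE w in M. vc (\<lambda>w. Ab *v vc (?d t) w) w = Ab *v vc (vc (?d t)) w" by (rule G.vce_mat[OF Lm])
    have e6: "AE w in M. vc (vc (?d t)) w = vc (?d t) w" by (rule G.vce_idem[OF Ld])
    from e1 e2 e3 e4 e5 e6 show ?thesis
      by eventually_elim (simp add: matrix_vector_mult_add_rdistrib algebra_simps matrix_vector_right_distrib matrix_vector_mult_diff_distrib)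
  qed
  have bm: "AE w in M. (norm (vc (?d (Suc s + k)) w))\<^sup>2 \<le> (a2\<^sup>2)^k * (norm (vc (?d (Suc s)) w))\<^sup>2" for k
  proof (induction k)
    case 0 show ?case by simp
  next
    case (Suc k)
    have sk: "s < Suc s + k" by simp
    from Suc stp[OF sk] show ?case
    proof eventually_elim
      case (elim w)
      have "(norm (vc (?d (Suc s + Suc k)) w))\<^sup>2 = (norm ((A + Ab) *v vc (?d (Suc s + k)) w))\<^sup>2"
        using elim(2) by simp
      also have "\<dots> \<le> a2\<^sup>2 * (norm (vc (?d (Suc s + k)) w))\<^sup>2" unfolding a2_def by (rule mat_norm_sq_bound)
      also have "\<dots> \<le> a2\<^sup>2 * ((a2\<^sup>2)^k * (norm (vc (?d (Suc s)) w))\<^sup>2)" by (intro mult_left_mono elim(1)) simp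
      finally show ?case by simp
    qed
  qed
  have be: "AE w in M. (norm (?d (Suc s + k) w - vc (?d (Suc s + k)) w))\<^sup>2 \<le> (a1\<^sup>2)^k * (norm (?d (Suc s) w - vc (?d (Suc s)) w))\<^sup>2" for k
  proof (induction k)
    case 0 show ?case by simp
  next
    case (Suc k)
    have sk: "s < Suc s + k" by simp
    from Suc stp[OF sk] show ?case
    proof eventually_elim
      case (elim w)
      have "(norm (?d (Suc s + Suc k) w - vc (?d (Suc s + Suc k)) w))\<^sup>2 = (norm (A *v (?d (Suc s + k) w - vc (?d (Suc s + k)) w)))\<^sup>2"
        using conjunct2[OF elim(2)] by (simp only: add_Suc_right)
      also have "\<dots> \<le> a1\<^sup>2 * (norm (?d (Suc s + k) w - vc (?d (Suc s + k)) w))\<^sup>2" unfolding a1_def by (rule mat_norm_sq_bound)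
      also have "\<dots> \<le> a1\<^sup>2 * ((a1\<^sup>2)^k * (norm (?d (Suc s) w - vc (?d (Suc s)) w))\<^sup>2)" by (intro mult_left_mono elim(1)) simp
      finally show ?case by simp
    qed
  qed
  define E1 where "E1 = (\<integral>w. (norm (?d (Suc s) w - vc (?d (Suc s)) w))\<^sup>2 \<partial>M)"
  define E2 where "E2 = (\<integral>w. (norm (vc (?d (Suc s)) w))\<^sup>2 \<partial>M)"
  have LE1: "L2 M (\<lambda>w. ?d (Suc s) w - vc (?d (Suc s)) w)" by (rule L2_diff[OF Ld Lm])
  have bint: "(\<integral>w. (norm (?d (Suc s + k) w))\<^sup>2 \<partial>M) \<le> 2 * (a1\<^sup>2)^k * E1 + 2 * (a2\<^sup>2)^k * E2" for k
  proof -
    let ?t = "Suc s + k"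
    have pw: "(norm (?d ?t w))\<^sup>2 \<le> 2 * (norm (?d ?t w - vc (?d ?t) w))\<^sup>2 + 2 * (norm (vc (?d ?t) w))\<^sup>2" for w
      using norm_add_sq_le[of "?d ?t w - vc (?d ?t) w" "vc (?d ?t) w"] by (simp only: diff_add_cancel)
    have "(\<integral>w. (norm (?d ?t w))\<^sup>2 \<partial>M) \<le> (\<integral>w. 2 * ((a1\<^sup>2)^k * (norm (?d (Suc s) w - vc (?d (Suc s)) w))\<^sup>2)
        + 2 * ((a2\<^sup>2)^k * (norm (vc (?d (Suc s)) w))\<^sup>2) \<partial>M)"
    proof (rule integral_mono_AE)
      show "integrable M (\<lambda>w. (norm (?d ?t w))\<^sup>2)" by (rule L2_sq[OF Ld])
      show "integrable M (\<lambda>w. 2 * ((a1\<^sup>2)^k * (norm (?d (Suc s) w - vc (?d (Suc s)) w))\<^sup>2)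
        + 2 * ((a2\<^sup>2)^k * (norm (vc (?d (Suc s)) w))\<^sup>2))"
        using L2_sq[OF LE1] L2_sq[OF Lm] by simp
      show "AE w in M. (norm (?d ?t w))\<^sup>2 \<le> 2 * ((a1\<^sup>2)^k * (norm (?d (Suc s) w - vc (?d (Suc s)) w))\<^sup>2)
        + 2 * ((a2\<^sup>2)^k * (norm (vc (?d (Suc s)) w))\<^sup>2)"
        using be[of k] bm[of k]
      proof eventually_elim
        case (elim w) show ?case using pw[of w] elim by linarith
      qed
    qed
    also have "\<dots> = 2 * (a1\<^sup>2)^k * E1 + 2 * (a2\<^sup>2)^k * E2"
      unfolding E1_def E2_def using L2_sq[OF LE1] L2_sq[OF Lm] by simp
    finally show ?thesis .
  qed
  have E1nn: "0 \<le> E1" and E2nn: "0 \<le> E2" unfolding E1_def E2_def by (auto intro!: integral_nonneg_AE)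
  have r1: "\<gamma> * a1\<^sup>2 < 1" and r2: "\<gamma> * a2\<^sup>2 < 1" using normA unfolding a1_def a2_def by auto
  have r1p: "0 \<le> \<gamma> * a1\<^sup>2" and r2p: "0 \<le> \<gamma> * a2\<^sup>2" using gpos by auto
  have gs: "summable (\<lambda>k. 2 * E1 * (\<gamma> * a1\<^sup>2)^k + 2 * E2 * (\<gamma> * a2\<^sup>2)^k)"
    by (intro summable_add summable_mult summable_geometric) (use r1 r2 r1p r2p in auto)
  have "summable (\<lambda>k. \<gamma>^(k + Suc s) * (\<integral>w. (norm (?d (k + Suc s) w))\<^sup>2 \<partial>M))"
  proof (rule summable_comparison_test[OF _ gs], intro exI allI impI)
    fix k :: nat
    have nn: "0 \<le> (\<integral>w. (norm (?d (k + Suc s) w))\<^sup>2 \<partial>M)" by (auto intro!: integral_nonneg_AE)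
    have g1: "\<gamma>^(k + Suc s) \<le> \<gamma>^k"
    proof -
      have "\<gamma>^(Suc s) \<le> 1" using gpos gle1 by (intro power_le_one) auto
      then have "\<gamma>^k * \<gamma>^(Suc s) \<le> \<gamma>^k" using gpos by (intro mult_left_le) auto
      then show ?thesis by (simp only: power_add)
    qed
    have "\<gamma>^(k + Suc s) * (\<integral>w. (norm (?d (k + Suc s) w))\<^sup>2 \<partial>M) \<le> \<gamma>^k * (2 * (a1\<^sup>2)^k * E1 + 2 * (a2\<^sup>2)^k * E2)"
      using bint[of k] g1 nn gpos by (simp add: add.commute[of k] mult_mono)
    also have "\<dots> = 2 * E1 * (\<gamma> * a1\<^sup>2)^k + 2 * E2 * (\<gamma> * a2\<^sup>2)^k" by (simp add: power_mult_distrib algebra_simps)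
    finally show "norm (\<gamma>^(k + Suc s) * (\<integral>w. (norm (?d (k + Suc s) w))\<^sup>2 \<partial>M)) \<le> 2 * E1 * (\<gamma> * a1\<^sup>2)^k + 2 * E2 * (\<gamma> * a2\<^sup>2)^k"
      using nn gpos by simp
  qed
  then have "summable (\<lambda>t. \<gamma>^t * (\<integral>w. (norm (?d t w))\<^sup>2 \<partial>M))"
    by (rule summable_iff_shift[THEN iffD1])
  then show ?thesis using Ld by (simp add: good_def)
qed

end



context eqm
begin

lemma perturb:
  fixes v1 v2 :: "nat \<Rightarrow> 'w \<Rightarrow> real^'l"
  assumes vF: "\<And>t. v1 t \<in> borel_measurable (F t)" "\<And>t. v2 t \<in> borel_measurable (F t)"
    and Lv: "\<And>t. L2 M (v1 t)" "\<And>t. L2 M (v2 t)"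
    and zero: "\<And>t. t \<noteq> s \<Longrightarrow> v1 t = (\<lambda>w. 0)" "\<And>t. t \<noteq> s \<Longrightarrow> v2 t = (\<lambda>w. 0)"
  shows "\<exists>K. \<forall>c. JJ eps (\<lambda>t w. u1 t w + c *\<^sub>R v1 t w) (\<lambda>t w. u2 t w + c *\<^sub>R v2 t w)
       = JJ eps u1 u2 + 2 * c * (\<gamma>^s / 2 * ((\<integral>w. (transpose B1 *v p s w + 2 *\<^sub>R (R1 *v u1 s w)
                 + transpose Bb1 *v vc (p s) w + 2 *\<^sub>R (Rb1 *v vc (u1 s) w)) \<bullet> v1 s w \<partial>M)
          + (\<integral>w. (transpose B2 *v p s w - 2 *\<^sub>R (R2 *v u2 s w)
                 + transpose Bb2 *v vc (p s) w - 2 *\<^sub>R (Rb2 *v vc (u2 s) w)) \<bullet> v2 s w \<partial>M))) + c\<^sup>2 * K"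
proof -
  have gd: "good (st (\<lambda>t w. 0) v1 v2)" by (rule d_good[OF Lv zero])
  have gv: "good v1" "good v2"
  proof -
    have "summable (\<lambda>t. \<gamma>^t * (\<integral>w. (norm (v1 t w))\<^sup>2 \<partial>M))"
    proof -
      have "(\<lambda>t. \<gamma>^t * (\<integral>w. (norm (v1 t w))\<^sup>2 \<partial>M)) = (\<lambda>t. if t = s then \<gamma>^t * (\<integral>w. (norm (v1 t w))\<^sup>2 \<partial>M) else 0)"
        using zero(1) by auto
      then show ?thesis by simp
    qed
    then show "good v1" using Lv by (simp add: good_def)
    have "summable (\<lambda>t. \<gamma>^t * (\<integral>w. (norm (v2 t w))\<^sup>2 \<partial>M))"
    proof -
      have "(\<lambda>t. \<gamma>^t * (\<integral>w. (norm (v2 t w))\<^sup>2 \<partial>M)) = (\<lambda>t. if t = s then \<gamma>^t * (\<integral>w. (norm (v2 t w))\<^sup>2 \<partial>M) else 0)"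
        using zero(2) by auto
      then show ?thesis by simp
    qed
    then show "good v2" using Lv by (simp add: good_def)
  qed
  note JE = J_expand[OF em gu1 gu2 gv(1) gv(2) gx gd]
  note GR = gradient[OF vF Lv zero gd]
  show ?thesis
    by (rule exI[of _ "\<integral>w. (\<Sum>t. \<gamma>^t * rc (st (\<lambda>t w. 0) v1 v2 t) (v1 t) (v2 t) w) \<partial>M"])
      (use JE sums_unique[OF GR, symmetric] in simp)
qed

theorem foc:
  assumes nash2: "\<forall>v2. proc_class M F \<gamma> v2 \<longrightarrow> JJ eps u1 v2 \<le> JJ eps u1 u2"
    and nash1: "\<forall>v1. proc_class M F \<gamma> v1 \<longrightarrow> JJ eps u1 u2 \<le> JJ eps v1 u2"
  shows "AE w in M. transpose B1 *v p s w + 2 *\<^sub>R (R1 *v u1 s w) + transpose Bb1 *v vc (p s) w + 2 *\<^sub>R (Rb1 *v vc (u1 s) w) = 0"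
    and "AE w in M. transpose B2 *v p s w - 2 *\<^sub>R (R2 *v u2 s w) + transpose Bb2 *v vc (p s) w - 2 *\<^sub>R (Rb2 *v vc (u2 s) w) = 0"
proof -
  have Lp: "\<And>t. L2 M (p t)" and Lu1: "\<And>t. L2 M (u1 t)" and Lu2: "\<And>t. L2 M (u2 t)"
    using gp' gu1 gu2 by (auto intro: good_L2)
  have pF: "\<And>t. p t \<in> borel_measurable (F t)" and u1F: "\<And>t. u1 t \<in> borel_measurable (F t)"
    and u2F: "\<And>t. u2 t \<in> borel_measurable (F t)"
    using pcp pc1 pc2 by (auto simp: proc_class_def)
  have Lvc: "\<And>f::'w \<Rightarrow> real^'d. L2 M f \<Longrightarrow> L2 M (vc f)" "\<And>f::'w \<Rightarrow> real^'l. L2 M f \<Longrightarrow> L2 M (vc f)"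
    using G.vce_L2 by auto
  have fin: "AE w in M. g w = 0" if Lg: "L2 M g" and gg: "AE w in M. g w = g' w" and gm: "g' \<in> borel_measurable M"
    and z: "(\<integral>w. g w \<bullet> g' w \<partial>M) = 0" for g g' :: "'w \<Rightarrow> real^'l"
  proof -
    have "(\<integral>w. g w \<bullet> g' w \<partial>M) = (\<integral>w. (norm (g w))\<^sup>2 \<partial>M)"
      by (rule integral_cong_AE) (use gg L2_meas[OF Lg] gm in \<open>auto simp: power2_norm_eq_inner\<close>)
    then have "(\<integral>w. (norm (g w))\<^sup>2 \<partial>M) = 0" using z by simp
    then have "AE w in M. (norm (g w))\<^sup>2 = 0"
      using integral_nonneg_eq_0_iff_AE[OF L2_sq[OF Lg]] by simp
    then show ?thesis by eventually_elim simp
  qed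
  define g1 where "g1 = (\<lambda>w. transpose B1 *v p s w + 2 *\<^sub>R (R1 *v u1 s w) + transpose Bb1 *v vc (p s) w + 2 *\<^sub>R (Rb1 *v vc (u1 s) w))"
  have Lg1: "L2 M g1" unfolding g1_def by (intro L2_add L2_mat L2_scaleR Lvc Lp Lu1)
  have "aeF s g1" unfolding g1_def by (intro aeF_add aeF_mat aeF_scaleR aeF_vc aeF_meas pF u1F Lp Lu1)
  then obtain g1' where g1m: "g1' \<in> borel_measurable (F s)" and g1e: "AE w in M. g1 w = g1' w"
    unfolding aeF_def by blast
  have g1mM: "g1' \<in> borel_measurable M" using g1m subF by (rule measurable_from_subalg[rotated])
  have Lg1': "L2 M g1'" by (rule L2_cong[OF Lg1 g1mM g1e])
  show "AE w in M. transpose B1 *v p s w + 2 *\<^sub>R (R1 *v u1 s w) + transpose Bb1 *v vc (p s) w + 2 *\<^sub>R (Rb1 *v vc (u1 s) w) = 0"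
  proof -
    define v1 where "v1 = (\<lambda>t. if t = s then g1' else (\<lambda>w. 0::real^'l))"
    define v2 where "v2 = (\<lambda>(t::nat) (w::'w). 0::real^'l)"
    have vF: "\<And>t. v1 t \<in> borel_measurable (F t)" "\<And>t. v2 t \<in> borel_measurable (F t)"
      unfolding v1_def v2_def using g1m by auto
    have Lv: "\<And>t. L2 M (v1 t)" "\<And>t. L2 M (v2 t)" unfolding v1_def v2_def using Lg1' L2_zero by auto
    have zero: "\<And>t. t \<noteq> s \<Longrightarrow> v1 t = (\<lambda>w. 0)" "\<And>t. t \<noteq> s \<Longrightarrow> v2 t = (\<lambda>w. 0)"
      unfolding v1_def v2_def by auto
    obtain K where K: "\<And>c. JJ eps (\<lambda>t w. u1 t w + c *\<^sub>R v1 t w) (\<lambda>t w. u2 t w + c *\<^sub>R v2 t w)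
       = JJ eps u1 u2 + 2 * c * (\<gamma>^s / 2 * ((\<integral>w. g1 w \<bullet> v1 s w \<partial>M)
          + (\<integral>w. (transpose B2 *v p s w - 2 *\<^sub>R (R2 *v u2 s w)
                 + transpose Bb2 *v vc (p s) w - 2 *\<^sub>R (Rb2 *v vc (u2 s) w)) \<bullet> v2 s w \<partial>M))) + c\<^sup>2 * K"
      using perturb[OF vF Lv zero] unfolding g1_def by blast
    have gv1: "good v1"
    proof -
      have "(\<lambda>t. \<gamma>^t * (\<integral>w. (norm (v1 t w))\<^sup>2 \<partial>M)) = (\<lambda>t. if t = s then \<gamma>^t * (\<integral>w. (norm (v1 t w))\<^sup>2 \<partial>M) else 0)"
        using zero(1) by auto
      then show ?thesis using Lv by (simp add: good_def)
    qed
    have ineq: "0 \<le> 2 * c * (\<gamma>^s / 2 * (\<integral>w. g1 w \<bullet> g1' w \<partial>M)) + c\<^sup>2 * K" for c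
    proof -
      have pc: "proc_class M F \<gamma> (\<lambda>t w. u1 t w + c *\<^sub>R v1 t w)"
      proof (rule good_pc)
        show "good (\<lambda>t w. u1 t w + c *\<^sub>R v1 t w)" by (intro good_add good_scaleR gu1 gv1)
        fix t show "(\<lambda>w. u1 t w + c *\<^sub>R v1 t w) \<in> borel_measurable (F t)" using u1F[of t] vF(1)[of t] by measurable
      qed
      have u2e: "(\<lambda>t w. u2 t w + c *\<^sub>R v2 t w) = u2" unfolding v2_def by simp
      have "JJ eps u1 u2 \<le> JJ eps (\<lambda>t w. u1 t w + c *\<^sub>R v1 t w) u2" using nash1 pc by blast
      then show ?thesis using K[of c] unfolding u2e v1_def v2_def by simp
    qed
    have "\<gamma>^s / 2 * (\<integral>w. g1 w \<bullet> g1' w \<partial>M) = 0" by (rule quad_zero[OF ineq])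
    then have z: "(\<integral>w. g1 w \<bullet> g1' w \<partial>M) = 0" using gpos by simp
    show ?thesis using fin[OF Lg1 g1e g1mM z] unfolding g1_def .
  qed
  define g2 where "g2 = (\<lambda>w. transpose B2 *v p s w - 2 *\<^sub>R (R2 *v u2 s w) + transpose Bb2 *v vc (p s) w - 2 *\<^sub>R (Rb2 *v vc (u2 s) w))"
  have g2alt: "g2 = (\<lambda>w. transpose B2 *v p s w + (-2) *\<^sub>R (R2 *v u2 s w) + transpose Bb2 *v vc (p s) w + (-2) *\<^sub>R (Rb2 *v vc (u2 s) w))"
    unfolding g2_def by (simp add: algebra_simps)
  have Lg2: "L2 M g2" unfolding g2alt by (intro L2_add L2_mat L2_scaleR Lvc Lp Lu2)
  have "aeF s g2" unfolding g2alt by (intro aeF_add aeF_mat aeF_scaleR aeF_vc aeF_meas pF u2F Lp Lu2)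
  then obtain g2' where g2m: "g2' \<in> borel_measurable (F s)" and g2e: "AE w in M. g2 w = g2' w"
    unfolding aeF_def by blast
  have g2mM: "g2' \<in> borel_measurable M" using g2m subF by (rule measurable_from_subalg[rotated])
  have Lg2': "L2 M g2'" by (rule L2_cong[OF Lg2 g2mM g2e])
  show "AE w in M. transpose B2 *v p s w - 2 *\<^sub>R (R2 *v u2 s w) + transpose Bb2 *v vc (p s) w - 2 *\<^sub>R (Rb2 *v vc (u2 s) w) = 0"
  proof -
    define v2 where "v2 = (\<lambda>t. if t = s then g2' else (\<lambda>w. 0::real^'l))"
    define v1 where "v1 = (\<lambda>(t::nat) (w::'w). 0::real^'l)"
    have vF: "\<And>t. v1 t \<in> borel_measurable (F t)" "\<And>t. v2 t \<in> borel_measurable (F t)"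
      unfolding v1_def v2_def using g2m by auto
    have Lv: "\<And>t. L2 M (v1 t)" "\<And>t. L2 M (v2 t)" unfolding v1_def v2_def using Lg2' L2_zero by auto
    have zero: "\<And>t. t \<noteq> s \<Longrightarrow> v1 t = (\<lambda>w. 0)" "\<And>t. t \<noteq> s \<Longrightarrow> v2 t = (\<lambda>w. 0)"
      unfolding v1_def v2_def by auto
    obtain K where K: "\<And>c. JJ eps (\<lambda>t w. u1 t w + c *\<^sub>R v1 t w) (\<lambda>t w. u2 t w + c *\<^sub>R v2 t w)
       = JJ eps u1 u2 + 2 * c * (\<gamma>^s / 2 * ((\<integral>w. (transpose B1 *v p s w + 2 *\<^sub>R (R1 *v u1 s w)
                 + transpose Bb1 *v vc (p s) w + 2 *\<^sub>R (Rb1 *v vc (u1 s) w)) \<bullet> v1 s w \<partial>M)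
          + (\<integral>w. g2 w \<bullet> v2 s w \<partial>M))) + c\<^sup>2 * K"
      using perturb[OF vF Lv zero] unfolding g2_def by blast
    have gv2: "good v2"
    proof -
      have "(\<lambda>t. \<gamma>^t * (\<integral>w. (norm (v2 t w))\<^sup>2 \<partial>M)) = (\<lambda>t. if t = s then \<gamma>^t * (\<integral>w. (norm (v2 t w))\<^sup>2 \<partial>M) else 0)"
        using zero(2) by auto
      then show ?thesis using Lv by (simp add: good_def)
    qed
    have ineq: "0 \<le> 2 * c * (- (\<gamma>^s / 2 * (\<integral>w. g2 w \<bullet> g2' w \<partial>M))) + c\<^sup>2 * (- K)" for c
    proof -
      have pc: "proc_class M F \<gamma> (\<lambda>t w. u2 t w + c *\<^sub>R v2 t w)"
      proof (rule good_pc)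
        show "good (\<lambda>t w. u2 t w + c *\<^sub>R v2 t w)" by (intro good_add good_scaleR gu2 gv2)
        fix t show "(\<lambda>w. u2 t w + c *\<^sub>R v2 t w) \<in> borel_measurable (F t)" using u2F[of t] vF(2)[of t] by measurable
      qed
      have u1e: "(\<lambda>t w. u1 t w + c *\<^sub>R v1 t w) = u1" unfolding v1_def by simp
      have "JJ eps u1 (\<lambda>t w. u2 t w + c *\<^sub>R v2 t w) \<le> JJ eps u1 u2" using nash2 pc by blast
      then show ?thesis using K[of c] unfolding u1e v1_def v2_def by simp
    qed
    have "- (\<gamma>^s / 2 * (\<integral>w. g2 w \<bullet> g2' w \<partial>M)) = 0" by (rule quad_zero[OF ineq])
    then have z: "(\<integral>w. g2 w \<bullet> g2' w \<partial>M) = 0" using gpos by simp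
    show ?thesis using fin[OF Lg2 g2e g2mM z] unfolding g2_def .
  qed
qed

end



lemma subalg_F0:
  assumes "prob_space M0" "prob_space M1"
  shows "subalgebra (M0 \<Otimes>\<^sub>M M1) (F0 M0 M1)"
proof -
  have "fst \<in> measurable (M0 \<Otimes>\<^sub>M M1) M0" by simp
  then have "sets (vimage_algebra (space (M0 \<Otimes>\<^sub>M M1)) fst M0) \<subseteq> sets (M0 \<Otimes>\<^sub>M M1)"
    by (simp add: measurable_iff_sets)
  then show ?thesis unfolding subalgebra_def F0_def by simp
qed

lemma prod_condexp:
  fixes M0 :: "'a measure" and M1 :: "'b measure" and f :: "'a \<times> 'b \<Rightarrow> real"
  assumes pM0: "prob_space M0" and pM1: "prob_space M1"
    and sub0: "subalgebra M0 N0" and sub1: "subalgebra M1 N1"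
    and Fs: "sets Ft \<subseteq> sets (N0 \<Otimes>\<^sub>M N1)" and Fsp: "space Ft = space (M0 \<Otimes>\<^sub>M M1)"
    and fstm: "fst \<in> measurable Ft N0"
    and fm: "f \<in> borel_measurable Ft" and fi: "integrable (M0 \<Otimes>\<^sub>M M1) f"
  shows "\<exists>g. g \<in> borel_measurable Ft \<and> (AE w in M0 \<Otimes>\<^sub>M M1. real_cond_exp (M0 \<Otimes>\<^sub>M M1) (F0 M0 M1) f w = g w)"
proof -
  interpret P: pair_prob_space M0 M1
    using pM0 pM1 by (simp add: pair_prob_space_def pair_sigma_finite_def prob_space_imp_sigma_finite)
  let ?M = "M0 \<Otimes>\<^sub>M M1"
  interpret G: psub ?M "F0 M0 M1" by unfold_locales (rule subalg_F0[OF pM0 pM1])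
  define N1r where "N1r = restr_to_subalg M1 N1"
  interpret N1r: finite_measure N1r
    unfolding N1r_def by (rule finite_measure_restr_to_subalg[OF sub1]) (rule P.M2.finite_measure_axioms)
  have spN0: "space N0 = space M0" and spN1: "space N1 = space M1"
    using sub0 sub1 by (auto simp: subalgebra_def)
  have sN1r: "sets N1r = sets N1" unfolding N1r_def by (rule sets_restr_to_subalg[OF sub1])
  have spFt: "space Ft = space (N0 \<Otimes>\<^sub>M N1)" using Fsp spN0 spN1 by (simp add: space_pair_measure)
  have fN: "f \<in> borel_measurable (N0 \<Otimes>\<^sub>M N1)"
    using measurable_mono[of borel borel Ft "N0 \<Otimes>\<^sub>M N1"] Fs spFt fm by auto
  have fNr: "(\<lambda>(x, y). f (x, y)) \<in> borel_measurable (N0 \<Otimes>\<^sub>M N1r)"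
    using fN by (simp add: measurable_cong_sets[OF sets_pair_measure_cong[OF refl sN1r] refl])
  define h where "h = (\<lambda>x. \<integral>y. f (x, y) \<partial>N1r)"
  have hN0: "h \<in> borel_measurable N0"
    unfolding h_def by (rule N1r.borel_measurable_lebesgue_integral[OF fNr])
  have hM0: "h \<in> borel_measurable M0" by (rule measurable_from_subalg[OF sub0 hN0])
  define h1 where "h1 = (\<lambda>x. \<integral>y. f (x, y) \<partial>M1)"
  have hh1: "h x = h1 x" if x: "x \<in> space M0" for x
  proof -
    have "(\<lambda>y. f (x, y)) \<in> borel_measurable N1"
      by (rule measurable_Pair2[OF fN]) (use x spN0 in simp)
    then show ?thesis unfolding h_def h1_def N1r_def by (rule integral_subalgebra2[OF sub1])
  qed
  define g where "g = (\<lambda>w::'a \<times> 'b. h (fst w))"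
  have gFt: "g \<in> borel_measurable Ft" unfolding g_def by (rule measurable_comp[OF fstm hN0, unfolded comp_def])
  have fM[measurable]: "f \<in> borel_measurable ?M" using fi by auto
  have h1i: "integrable M0 h1" unfolding h1_def by (rule P.integrable_fst'[OF fi])
  have hi: "integrable M0 h"
    by (rule integrable_cong_AE_imp[OF h1i hM0]) (use hh1 in auto)
  have fstM: "fst \<in> measurable ?M M0" by simp
  have dfst: "distr ?M M0 fst = M0" by (rule P.M2.distr_pair_fst)
  have gi: "integrable ?M g"
    using integrable_distr_eq[OF fstM hM0] hi dfst by (simp add: g_def)
  have gG: "g \<in> borel_measurable (F0 M0 M1)"
    unfolding g_def F0_def
    by (rule measurable_comp[OF measurable_vimage_algebra1 hM0, unfolded comp_def]) (auto simp: space_pair_measure)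
  have "AE w in ?M. real_cond_exp ?M (F0 M0 M1) f w = g w"
  proof (rule G.real_cond_exp_charact[OF _ fi gi gG])
    fix A assume A: "A \<in> sets (F0 M0 M1)"
    have "fst \<in> space ?M \<rightarrow> space M0" by (auto simp: space_pair_measure)
    then obtain A0 where A0: "A0 \<in> sets M0" and AA: "A = fst -` A0 \<inter> space ?M"
      using A unfolding F0_def by (auto simp: sets_vimage_algebra2)
    have ind: "\<And>w. w \<in> space ?M \<Longrightarrow> indicator A w = (indicator A0 (fst w) :: real)"
      unfolding AA by (auto simp: indicator_def)
    have A0m[measurable]: "A0 \<in> sets M0" by (rule A0)
    have i0: "integrable ?M (\<lambda>w. indicator (A0 \<times> space M1) w *\<^sub>R f w)"
      using integrable_mult_indicator[OF _ fi, of "A0 \<times> space M1"] A0 by auto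
    have i1: "integrable ?M (\<lambda>w. indicator A0 (fst w) * f w)"
    proof (rule Bochner_Integration.integrable_cong[THEN iffD1, OF refl _ i0])
      fix w assume "w \<in> space ?M"
      then show "indicator (A0 \<times> space M1) w *\<^sub>R f w = indicator A0 (fst w) * f w"
        by (auto simp: indicator_def space_pair_measure)
    qed
    have "(\<integral>w\<in>A. f w \<partial>?M) = (\<integral>w. indicator A0 (fst w) * f w \<partial>?M)"
      unfolding set_lebesgue_integral_def by (rule Bochner_Integration.integral_cong[OF refl]) (simp add: ind)
    also have "\<dots> = (\<integral>x. (\<integral>y. indicator A0 x * f (x, y) \<partial>M1) \<partial>M0)"
      using P.integral_fst'[OF i1] by simp
    also have "\<dots> = (\<integral>x. indicator A0 x * h1 x \<partial>M0)" unfolding h1_def by simp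
    also have "\<dots> = (\<integral>x. indicator A0 x * h x \<partial>M0)"
      by (rule Bochner_Integration.integral_cong[OF refl]) (simp add: hh1)
    also have "\<dots> = (\<integral>w. indicator A0 (fst w) * h (fst w) \<partial>?M)"
      using integral_distr[OF fstM, of "\<lambda>x. indicator A0 x * h x"] hM0 dfst by simp
    also have "\<dots> = (\<integral>w\<in>A. g w \<partial>?M)"
      unfolding set_lebesgue_integral_def g_def by (rule Bochner_Integration.integral_cong[OF refl]) (simp add: ind)
    finally show "(\<integral>w\<in>A. f w \<partial>?M) = (\<integral>w\<in>A. g w \<partial>?M)" .
  qed
  then show ?thesis using gFt by blast
qed



lemma filt_facts:
  fixes M0 :: "'a measure" and M1 :: "'b measure"
    and e0 :: "nat \<Rightarrow> 'a \<Rightarrow> real^'d" and e1 :: "nat \<Rightarrow> 'b \<Rightarrow> real^'d"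
  assumes pM0: "prob_space M0" and pM1: "prob_space M1"
    and e0m: "\<And>t. e0 t \<in> borel_measurable M0" and e1m: "\<And>t. e1 t \<in> borel_measurable M1"
  shows "subalgebra (M0 \<Otimes>\<^sub>M M1) (filt M0 M1 e0 e1 t)"
    and "sets (filt M0 M1 e0 e1 t) \<subseteq> sets (filt M0 M1 e0 e1 (Suc t))"
    and "\<And>f::'a \<times> 'b \<Rightarrow> real. f \<in> borel_measurable (filt M0 M1 e0 e1 t) \<Longrightarrow> integrable (M0 \<Otimes>\<^sub>M M1) f \<Longrightarrow>
        \<exists>g. g \<in> borel_measurable (filt M0 M1 e0 e1 t) \<and>
          (AE w in M0 \<Otimes>\<^sub>M M1. real_cond_exp (M0 \<Otimes>\<^sub>M M1) (F0 M0 M1) f w = g w)"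
proof -
  let ?M = "M0 \<Otimes>\<^sub>M M1"
  define gens where "gens = (\<lambda>t. (\<Union>s\<in>{..t}. {(\<lambda>w. e0 s (fst w)) -` B \<inter> space ?M | B. B \<in> sets borel}) \<union>
      (\<Union>s\<in>{..t}. {(\<lambda>w. e1 s (snd w)) -` B \<inter> space ?M | B. B \<in> sets borel}))"
  have fd: "filt M0 M1 e0 e1 t = sigma (space ?M) (gens t)" for t unfolding filt_def gens_def ..
  have gP: "gens t \<subseteq> Pow (space ?M)" for t unfolding gens_def by auto
  have gM: "gens t \<subseteq> sets ?M" for t
  proof -
    have "(\<lambda>w. e0 s (fst w)) \<in> borel_measurable ?M" for s using e0m by measurable
    moreover have "(\<lambda>w. e1 s (snd w)) \<in> borel_measurable ?M" for s using e1m by measurable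
    ultimately show ?thesis unfolding gens_def by (auto intro: measurable_sets)
  qed
  have sF: "sets (filt M0 M1 e0 e1 t) = sigma_sets (space ?M) (gens t)" for t
    unfolding fd by (rule sets_measure_of[OF gP])
  have spF: "space (filt M0 M1 e0 e1 t) = space ?M" for t
    unfolding fd by (rule space_measure_of_conv)
  show "subalgebra ?M (filt M0 M1 e0 e1 t)"
    unfolding subalgebra_def sF spF using sets.sigma_sets_subset[OF gM] by simp
  have "gens t \<subseteq> gens (Suc t)" unfolding gens_def by (intro Un_mono UN_mono) auto
  then show "sets (filt M0 M1 e0 e1 t) \<subseteq> sets (filt M0 M1 e0 e1 (Suc t))"
    unfolding sF by (rule sigma_sets_mono')
  define g0 where "g0 = (\<Union>s\<in>{..t}. {e0 s -` B \<inter> space M0 | B. B \<in> sets borel})"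
  define g1 where "g1 = (\<Union>s\<in>{..t}. {e1 s -` B \<inter> space M1 | B. B \<in> sets borel})"
  define N0 where "N0 = sigma (space M0) g0"
  define N1 where "N1 = sigma (space M1) g1"
  have g0P: "g0 \<subseteq> Pow (space M0)" and g1P: "g1 \<subseteq> Pow (space M1)" unfolding g0_def g1_def by auto
  have sN0: "sets N0 = sigma_sets (space M0) g0" unfolding N0_def by (rule sets_measure_of[OF g0P])
  have sN1: "sets N1 = sigma_sets (space M1) g1" unfolding N1_def by (rule sets_measure_of[OF g1P])
  have spN0: "space N0 = space M0" unfolding N0_def by (rule space_measure_of_conv)
  have spN1: "space N1 = space M1" unfolding N1_def by (rule space_measure_of_conv)
  have g0M: "g0 \<subseteq> sets M0" unfolding g0_def using e0m by (auto intro: measurable_sets)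
  have g1M: "g1 \<subseteq> sets M1" unfolding g1_def using e1m by (auto intro: measurable_sets)
  have sub0: "subalgebra M0 N0" unfolding subalgebra_def sN0 spN0 using sets.sigma_sets_subset[OF g0M] by simp
  have sub1: "subalgebra M1 N1" unfolding subalgebra_def sN1 spN1 using sets.sigma_sets_subset[OF g1M] by simp
  have Fs: "sets (filt M0 M1 e0 e1 t) \<subseteq> sets (N0 \<Otimes>\<^sub>M N1)"
  proof -
    have sp: "space ?M = space (N0 \<Otimes>\<^sub>M N1)" by (simp add: space_pair_measure spN0 spN1)
    have "gens t \<subseteq> sets (N0 \<Otimes>\<^sub>M N1)"
    proof
      fix X assume "X \<in> gens t"
      then consider (a) s B where "s \<le> t" "B \<in> sets borel" "X = (\<lambda>w. e0 s (fst w)) -` B \<inter> space ?M"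
        | (b) s B where "s \<le> t" "B \<in> sets borel" "X = (\<lambda>w. e1 s (snd w)) -` B \<inter> space ?M"
        unfolding gens_def by auto
      then show "X \<in> sets (N0 \<Otimes>\<^sub>M N1)"
      proof cases
        case a
        have "X = (e0 s -` B \<inter> space M0) \<times> space N1"
          using a by (auto simp: space_pair_measure spN1)
        moreover have "e0 s -` B \<inter> space M0 \<in> sets N0" unfolding sN0 g0_def using a by auto
        ultimately show ?thesis by auto
      next
        case b
        have "X = space N0 \<times> (e1 s -` B \<inter> space M1)"
          using b by (auto simp: space_pair_measure spN0)
        moreover have "e1 s -` B \<inter> space M1 \<in> sets N1" unfolding sN1 g1_def using b by auto
        ultimately show ?thesis by auto
      qed
    qed
    then show ?thesis unfolding sF sp by (rule sets.sigma_sets_subset)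
  qed
  have fstm: "fst \<in> measurable (filt M0 M1 e0 e1 t) N0"
    unfolding N0_def
  proof (rule measurable_measure_of[OF g0P])
    show "fst \<in> space (filt M0 M1 e0 e1 t) \<rightarrow> space M0" by (auto simp: spF space_pair_measure)
    fix y assume "y \<in> g0"
    then obtain s B where sB: "s \<le> t" "B \<in> sets borel" "y = e0 s -` B \<inter> space M0" unfolding g0_def by auto
    have "fst -` y \<inter> space (filt M0 M1 e0 e1 t) = (\<lambda>w. e0 s (fst w)) -` B \<inter> space ?M"
      using sB by (auto simp: spF space_pair_measure)
    also have "\<dots> \<in> gens t" unfolding gens_def using sB by auto
    finally show "fst -` y \<inter> space (filt M0 M1 e0 e1 t) \<in> sets (filt M0 M1 e0 e1 t)"
      unfolding sF by auto
  qed
  fix f :: "'a \<times> 'b \<Rightarrow> real"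
  assume fm: "f \<in> borel_measurable (filt M0 M1 e0 e1 t)" and fi: "integrable ?M f"
  show "\<exists>g. g \<in> borel_measurable (filt M0 M1 e0 e1 t) \<and>
          (AE w in ?M. real_cond_exp ?M (F0 M0 M1) f w = g w)"
    by (rule prod_condexp[OF pM0 pM1 sub0 sub1 Fs spF fstm fm fi])
qed



theorem mainTheorem3:
  fixes M0 :: "'a measure" and M1 :: "'b measure"
    and e0 :: "nat \<Rightarrow> 'a \<Rightarrow> real^'d" and e1 :: "nat \<Rightarrow> 'b \<Rightarrow> real^'d"
    and \<gamma> :: real
    and A Ab Q Qb :: "real^'d^'d"
    and B1 Bb1 B2 Bb2 :: "real^'l^'d"
    and R1 Rb1 R2 Rb2 :: "real^'l^'l"
    and u1 u2 :: "nat \<Rightarrow> 'a \<times> 'b \<Rightarrow> real^'l"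
    and p :: "nat \<Rightarrow> 'a \<times> 'b \<Rightarrow> real^'d"
  defines "M \<equiv> M0 \<Otimes>\<^sub>M M1"
    and "G \<equiv> F0 M0 M1"
    and "F \<equiv> filt M0 M1 e0 e1"
    and "X \<equiv> (\<lambda>v1 v2. state (M0 \<Otimes>\<^sub>M M1) (F0 M0 M1) (\<lambda>t w. e0 t (fst w) + e1 t (snd w)) A Ab B1 Bb1 B2 Bb2 v1 v2)"
    and "J \<equiv> (\<lambda>v1 v2. \<integral>w. (\<Sum>t. \<gamma>^t * run_cost (M0 \<Otimes>\<^sub>M M1) (F0 M0 M1) Q Qb R1 Rb1 R2 Rb2 ((\<lambda>v1 v2. state (M0 \<Otimes>\<^sub>M M1) (F0 M0 M1) (\<lambda>t w. e0 t (fst w) + e1 t (snd w)) A Ab B1 Bb1 B2 Bb2 v1 v2) v1 v2 t) (v1 t) (v2 t) w) \<partial>(M0 \<Otimes>\<^sub>M M1))"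
  assumes gamma: "0 < \<gamma>" "\<gamma> \<le> 1"
    and noise0: "noise_assm M0 e0" and noise1: "noise_assm M1 e1"
    and symQ: "symm Q" "symm Qb"
    and symR: "symm R1" "symm Rb1" "symm R2" "symm Rb2"
    and posR: "pos_def R1" "pos_def (R1 + Rb1)" "pos_def R2" "pos_def (R2 + Rb2)"
    and normA: "\<gamma> * (mat_norm A)\<^sup>2 < 1" "\<gamma> * (mat_norm (A + Ab))\<^sup>2 < 1"
    and adm: "proc_class M F \<gamma> u1" "proc_class M F \<gamma> u2" "proc_class M F \<gamma> (X u1 u2)"
    and nash: "\<forall>v2. proc_class M F \<gamma> v2 \<longrightarrow> J u1 v2 \<le> J u1 u2"
              "\<forall>v1. proc_class M F \<gamma> v1 \<longrightarrow> J u1 u2 \<le> J v1 u2"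
    and p_X: "proc_class M F \<gamma> p"
    and adjoint: "\<And>t. AE w in M. p t w = \<gamma> *\<^sub>R vcond_exp M (F t)
         (\<lambda>v. transpose A *v p (Suc t) v + 2 *\<^sub>R (Q *v X u1 u2 (Suc t) v)
            + transpose Ab *v vcond_exp M G (p (Suc t)) v
            + 2 *\<^sub>R (Qb *v vcond_exp M G (X u1 u2 (Suc t)) v)) w"
  shows "\<forall>t. (AE w in M. transpose B1 *v p t w + 2 *\<^sub>R (R1 *v u1 t w)
                 + transpose Bb1 *v vcond_exp M G (p t) w + 2 *\<^sub>R (Rb1 *v vcond_exp M G (u1 t) w) = 0)
           \<and> (AE w in M. transpose B2 *v p t w - 2 *\<^sub>R (R2 *v u2 t w)
                 + transpose Bb2 *v vcond_exp M G (p t) w - 2 *\<^sub>R (Rb2 *v vcond_exp M G (u2 t) w) = 0)"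
proof -
  have pM0: "prob_space M0" and e0m: "\<And>t. e0 t \<in> borel_measurable M0"
    using noise0 by (auto simp: noise_assm_def)
  have pM1: "prob_space M1" and e1m: "\<And>t. e1 t \<in> borel_measurable M1"
    using noise1 by (auto simp: noise_assm_def)
  have pM: "prob_space M" unfolding M_def by (rule prob_space_pair[OF pM0 pM1])
  note FF = filt_facts[OF pM0 pM1 e0m e1m]
  have mfgI: "mfg M G F \<gamma>"
  proof (rule mfg.intro[OF pM], rule mfg_axioms.intro)
    show "subalgebra M G" unfolding M_def G_def by (rule subalg_F0[OF pM0 pM1])
    show "\<And>t. subalgebra M (F t)" unfolding M_def F_def by (rule FF(1))
    show "\<And>t. sets (F t) \<subseteq> sets (F (Suc t))" unfolding F_def by (rule FF(2))
    show "\<And>t f. f \<in> borel_measurable (F t) \<Longrightarrow> integrable M f \<Longrightarrow>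
        \<exists>g. g \<in> borel_measurable (F t) \<and> (AE w in M. real_cond_exp M G f w = g w)"
      unfolding M_def G_def F_def by (rule FF(3))
    show "0 < \<gamma>" "\<gamma> \<le> 1" using gamma by auto
  qed
  have gameI: "game M G F \<gamma> A Ab Q Qb R1 Rb1 R2 Rb2"
    by (rule game.intro[OF mfgI game_axioms.intro]) (use symQ symR normA in auto)
  define eps where "eps = (\<lambda>t w. e0 t (fst w) + e1 t (snd w))"
  have epsm: "\<And>t. eps t \<in> borel_measurable M"
    unfolding eps_def M_def using e0m e1m by measurable
  have Xst: "X v1 v2 = state M G eps A Ab B1 Bb1 B2 Bb2 v1 v2" for v1 v2
    unfolding X_def M_def G_def eps_def ..
  have Jst: "J v1 v2 = game.JJ M G \<gamma> A Ab Q Qb B1 Bb1 B2 Bb2 R1 Rb1 R2 Rb2 eps v1 v2" for v1 v2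
    unfolding game.JJ_def[OF gameI] unfolding J_def M_def G_def eps_def ..
  have eqmI: "eqm M G F \<gamma> A Ab Q Qb B1 Bb1 B2 Bb2 R1 Rb1 R2 Rb2 eps u1 u2 p"
  proof (rule eqm.intro[OF gameI], rule eqm_axioms.intro)
    show "\<And>t. eps t \<in> borel_measurable M" by (rule epsm)
    show "proc_class M F \<gamma> u1" "proc_class M F \<gamma> u2" using adm by auto
    show "proc_class M F \<gamma> (state M G eps A Ab B1 Bb1 B2 Bb2 u1 u2)" using adm(3) unfolding Xst .
    show "proc_class M F \<gamma> p" by (rule p_X)
    show "\<And>t. AE w in M. p t w = \<gamma> *\<^sub>R vcond_exp M (F t)
         (\<lambda>v. transpose A *v p (Suc t) v + 2 *\<^sub>R (Q *v state M G eps A Ab B1 Bb1 B2 Bb2 u1 u2 (Suc t) v)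
            + transpose Ab *v vcond_exp M G (p (Suc t)) v
            + 2 *\<^sub>R (Qb *v vcond_exp M G (state M G eps A Ab B1 Bb1 B2 Bb2 u1 u2 (Suc t)) v)) w"
      using adjoint unfolding Xst .
  qed
  interpret E: eqm M G F \<gamma> A Ab Q Qb B1 Bb1 B2 Bb2 R1 Rb1 R2 Rb2 eps u1 u2 p by (rule eqmI)
  have n2: "\<forall>v2. proc_class M F \<gamma> v2 \<longrightarrow> E.JJ eps u1 v2 \<le> E.JJ eps u1 u2"
    using nash(1) unfolding Jst .
  have n1: "\<forall>v1. proc_class M F \<gamma> v1 \<longrightarrow> E.JJ eps u1 u2 \<le> E.JJ eps v1 u2"
    using nash(2) unfolding Jst .
  show ?thesis using E.foc[OF n2 n1] by blast
qed


end
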